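(* Let $T$ be a tree with $n$ vertices. The straight-line drawing of $T$ produced by Algorithm 2 is monotone (and planar), and every vertex is placed at an integer point $(x,y)$ with $|x|\le\frac{n-\mathrm{odd}(n)}{2}$ and $0\le y\le\frac{n-\mathrm{odd}(n)}{2}$. Hence the drawing fits on a grid of $n\times\frac{n+1}{2}$ points when $n$ is odd and of $(n+1)\times(\frac{n}{2}+1)$ points when $n$ is even.
   Context: A vertex $r$ of an $n$-vertex tree $T$ is a gravity root if every connected component of $T\setminus r$ has at most $\frac{n}{2}$ vertices. $\mathrm{odd}(n)=1$ if $n$ is odd, $0$ otherwise. $T_v$ is the subtree rooted at $v$, $|T_v|$ its number of vertices. A grid of $a\times b$ points means $a$ consecutive integer $x$-values and $b$ consecutive integer $y$-values. Strategy 1: for a non-leaf vertex $u$ with assigned $a_1(u)<a_2(u)$ and children $v_1,\dots,v_m$ in order, set $a_1(v_1)=a_1(u)$, $a_1(v_i)=a_2(v_{i-1})$ for $1<i\le m$, and $a_2(v_i)=a_1(v_i)+(a_2(u)-a_1(u))\cdot\frac{|T_{v_i}|}{|T_u|-1}$. Point rule $P_1(\theta_1,\theta_2)$ for $0\le\theta_1<\theta_2\le\frac{\pi}{2}$, with $d=\lceil\frac{1}{\theta_2-\theta_1}\rceil$: (i) if $\theta_2-\theta_1>\frac{\pi}{4}$: $(1,1)$; (ii) if $\arctan(\frac12)<\theta_2-\theta_1\le\frac{\pi}{4}$: $(1,2)$ if $\theta_1\ge\frac{\pi}{4}$, $(1,1)$ if $\arctan(\frac12)\le\theta_1<\frac{\pi}{4}$,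 $(2,1)$ if $\theta_1<\arctan(\frac12)$; (iii) if $\theta_2-\theta_1\le\arctan(\frac12)$: $(d,\lfloor\tan(\theta_1)d+1\rfloor)$ if $\theta_2\le\frac{\pi}{4}$, $(1,1)$ if $\theta_1<\frac{\pi}{4}<\theta_2$, $(\lfloor\tan(\frac{\pi}{2}-\theta_2)d+1\rfloor,d)$ if $\theta_1\ge\frac{\pi}{4}$. Point rule $P_2(\beta_1,\beta_2)$ for $0\le\beta_1<\beta_2\le\pi$: $(0,1)$ if $\beta_1<\frac{\pi}{2}<\beta_2$; $P_1(\beta_1,\beta_2)$ if $\beta_2\le\frac{\pi}{2}$; $(-x,y)$ with $(x,y)=P_1(\pi-\beta_2,\pi-\beta_1)$ if $\beta_1\ge\frac{\pi}{2}$. Algorithm 2 (input: a tree $T$, possibly with a cyclic order of neighbors at each vertex): choose a gravity root $r$ and root $T$ at $r$ (children ordered according to the given embedding, if any); set $a_1(r)=0$, $a_2(r)=\pi$, assign angles to all other vertices top-down by Strategy 1; place $r$ at $(0,0)$; top-down, place each child $v$ of an already placed vertex $u$ at (position of $u$) $+P_2(a_1(v),a_2(v))$. A path $p_0,\dots,p_k$ in a straight-line drawing is monotone if there is a line $\ell$ such that the orthogonal projections of $p_0,\dots,p_k$ onto $\ell$ appear along $\ell$ in this order; a drawing is monotone if every pair of vertices is joined by a monotone path. *)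

theory Defs
  imports "HOL-Analysis.Analysis"
begin

definition walk :: "('a \<times> 'a) set \<Rightarrow> 'a list \<Rightarrow> bool" where
  "walk E xs \<longleftrightarrow> xs \<noteq> [] \<and> (\<forall>i < length xs - 1. (xs ! i, xs ! Suc i) \<in> E)"

(* a tree: finite nonempty connected graph with n-1 (undirected) edges;
   E contains both orientations of every edge *)
definition is_tree :: "'a set \<Rightarrow> ('a \<times> 'a) set \<Rightarrow> bool" where
  "is_tree V E \<longleftrightarrow> finite V \<and> V \<noteq> {} \<and> E \<subseteq> V \<times> V \<and> sym E \<and> (\<forall>x. (x, x) \<notin> E)
     \<and> (\<forall>u\<in>V. \<forall>v\<in>V. (u, v) \<in> E\<^sup>*) \<and> card E = 2 * (card V - 1)"

definition comp_without :: "'a set \<Rightarrow> ('a \<times> 'a) set \<Rightarrow> 'a \<Rightarrow> 'a \<Rightarrow> 'a set" where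
  "comp_without V E r x = {y. (x, y) \<in> (E \<inter> ((V - {r}) \<times> (V - {r})))\<^sup>*}"

definition gravity_root :: "'a set \<Rightarrow> ('a \<times> 'a) set \<Rightarrow> 'a \<Rightarrow> bool" where
  "gravity_root V E r \<longleftrightarrow> r \<in> V \<and>
     (\<forall>x \<in> V - {r}. real (card (comp_without V E r x)) \<le> real (card V) / 2)"

definition subtree :: "'a set \<Rightarrow> ('a \<times> 'a) set \<Rightarrow> 'a \<Rightarrow> 'a \<Rightarrow> 'a set" where
  "subtree V E r u = {v \<in> V. \<forall>xs. walk E xs \<and> hd xs = r \<and> last xs = v \<longrightarrow> u \<in> set xs}"

definition children :: "'a set \<Rightarrow> ('a \<times> 'a) set \<Rightarrow> 'a \<Rightarrow> 'a \<Rightarrow> 'a set" where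
  "children V E r u = {v. (u, v) \<in> E \<and> v \<in> subtree V E r u \<and> v \<noteq> u}"

definition child_order :: "'a set \<Rightarrow> ('a \<times> 'a) set \<Rightarrow> 'a \<Rightarrow> ('a \<Rightarrow> 'a list) \<Rightarrow> bool" where
  "child_order V E r chl \<longleftrightarrow> (\<forall>u\<in>V. distinct (chl u) \<and> set (chl u) = children V E r u)"

definition strategy1 :: "'a set \<Rightarrow> ('a \<times> 'a) set \<Rightarrow> 'a \<Rightarrow> ('a \<Rightarrow> 'a list)
    \<Rightarrow> ('a \<Rightarrow> real) \<Rightarrow> ('a \<Rightarrow> real) \<Rightarrow> bool" where
  "strategy1 V E r chl a1 a2 \<longleftrightarrow> a1 r = 0 \<and> a2 r = pi \<and>
     (\<forall>u\<in>V. \<forall>i < length (chl u).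
        a1 (chl u ! i) = (if i = 0 then a1 u else a2 (chl u ! (i - 1))) \<and>
        a2 (chl u ! i) = a1 (chl u ! i) + (a2 u - a1 u) *
            real (card (subtree V E r (chl u ! i))) / (real (card (subtree V E r u)) - 1))"

definition P1 :: "real \<Rightarrow> real \<Rightarrow> int \<times> int" where
  "P1 t1 t2 = (let d = \<lceil>1 / (t2 - t1)\<rceil> in
     if t2 - t1 > pi / 4 then (1, 1)
     else if t2 - t1 > arctan (1/2) then
       (if t1 \<ge> pi / 4 then (1, 2) else if t1 \<ge> arctan (1/2) then (1, 1) else (2, 1))
     else if t2 \<le> pi / 4 then (d, \<lfloor>tan t1 * real_of_int d + 1\<rfloor>)
     else if t1 < pi / 4 then (1, 1)
     else (\<lfloor>tan (pi / 2 - t2) * real_of_int d + 1\<rfloor>, d))"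

definition P2 :: "real \<Rightarrow> real \<Rightarrow> int \<times> int" where
  "P2 b1 b2 = (if b1 < pi / 2 \<and> pi / 2 < b2 then (0, 1)
     else if b2 \<le> pi / 2 then P1 b1 b2
     else (- fst (P1 (pi - b2) (pi - b1)), snd (P1 (pi - b2) (pi - b1))))"

definition algorithm2 :: "'a set \<Rightarrow> ('a \<times> 'a) set \<Rightarrow> 'a \<Rightarrow> ('a \<Rightarrow> 'a list)
    \<Rightarrow> ('a \<Rightarrow> real) \<Rightarrow> ('a \<Rightarrow> real) \<Rightarrow> ('a \<Rightarrow> int \<times> int) \<Rightarrow> bool" where
  "algorithm2 V E r chl a1 a2 pos \<longleftrightarrow>
     gravity_root V E r \<and> child_order V E r chl \<and> strategy1 V E r chl a1 a2 \<and>
     pos r = (0, 0) \<and>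
     (\<forall>u\<in>V. \<forall>v \<in> children V E r u.
        pos v = (fst (pos u) + fst (P2 (a1 v) (a2 v)), snd (pos u) + snd (P2 (a1 v) (a2 v))))"

definition rpt :: "('a \<Rightarrow> int \<times> int) \<Rightarrow> 'a \<Rightarrow> real \<times> real" where
  "rpt pos v = (real_of_int (fst (pos v)), real_of_int (snd (pos v)))"

definition proj :: "real \<times> real \<Rightarrow> real \<times> real \<Rightarrow> real" where
  "proj d p = fst d * fst p + snd d * snd p"

definition monotone_path :: "('a \<Rightarrow> int \<times> int) \<Rightarrow> 'a list \<Rightarrow> bool" where
  "monotone_path pos xs \<longleftrightarrow> (\<exists>d :: real \<times> real. d \<noteq> 0 \<and>
     (\<forall>i < length xs - 1. proj d (rpt pos (xs ! i)) < proj d (rpt pos (xs ! Suc i))))"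

definition monotone_drawing :: "'a set \<Rightarrow> ('a \<times> 'a) set \<Rightarrow> ('a \<Rightarrow> int \<times> int) \<Rightarrow> bool" where
  "monotone_drawing V E pos \<longleftrightarrow> (\<forall>u\<in>V. \<forall>v\<in>V. \<exists>xs. walk E xs \<and> distinct xs \<and>
     hd xs = u \<and> last xs = v \<and> monotone_path pos xs)"

definition planar_drawing :: "'a set \<Rightarrow> ('a \<times> 'a) set \<Rightarrow> ('a \<Rightarrow> int \<times> int) \<Rightarrow> bool" where
  "planar_drawing V E pos \<longleftrightarrow> inj_on pos V \<and>
     (\<forall>a b c d. (a, b) \<in> E \<and> (c, d) \<in> E \<and> {a, b} \<noteq> {c, d} \<longrightarrow>
        closed_segment (rpt pos a) (rpt pos b) \<inter> closed_segment (rpt pos c) (rpt pos d)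
          \<subseteq> rpt pos ` ({a, b} \<inter> {c, d})) \<and>
     (\<forall>a b w. (a, b) \<in> E \<and> w \<in> V \<and> w \<notin> {a, b} \<longrightarrow>
        rpt pos w \<notin> closed_segment (rpt pos a) (rpt pos b))"

definition odd_ind :: "nat \<Rightarrow> nat" where
  "odd_ind n = (if odd n then 1 else 0)"

end

theory Submission
  imports Defs
begin



lemma A_facts:
  shows "0 < arctan (1/2::real)" "arctan (1/2::real) \<le> 1/2"
    "pi/4 < 2 * arctan (1/2::real)" "arctan (2::real) = pi/2 - arctan (1/2)"
    "arctan (1/2::real) < pi/4"
proof -
  show "0 < arctan (1/2::real)" by simp
  show "arctan (1/2::real) \<le> 1/2" by (rule arctan_le_self) simp
  have "arctan (1/2::real) + arctan (1/2) = arctan ((1/2 + 1/2) / (1 - 1/2 * (1/2)))"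
    by (rule arctan_add) auto
  also have "\<dots> = arctan (4/3)" by simp
  finally have "2 * arctan (1/2::real) = arctan (4/3)" by simp
  moreover have "arctan 1 < arctan (4/3::real)" by (simp only: arctan_less_iff)
  ultimately show "pi/4 < 2 * arctan (1/2::real)" by (simp add: arctan_one)
  have "arctan (inverse (2::real)) = pi/2 - arctan 2"
    by (rule arctan_inverse) simp
  then show "arctan (2::real) = pi/2 - arctan (1/2)" by simp
  have "arctan (1/2::real) < arctan 1" by (subst arctan_less_iff) simp
  then show "arctan (1/2::real) < pi/4" by (simp add: arctan_one)
qed

lemma tan_diff_gt:
  assumes "0 \<le> a" "a < b" "b < pi/2"
  shows "tan b - tan a > b - a"
proof -
  have d: "DERIV (\<lambda>x. tan x - x) x :> inverse ((cos x)\<^sup>2) - 1" if "a \<le> x" "x \<le> b" for x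
  proof -
    have "cos x \<noteq> 0" using that assms pi_gt3 by (intro cos_gt_zero_pi[THEN less_imp_neq, symmetric]) auto
    then show ?thesis by (auto intro!: derivative_eq_intros)
  qed
  obtain z where z: "a < z" "z < b" "(tan b - b) - (tan a - a) = (b - a) * (inverse ((cos z)\<^sup>2) - 1)"
    using MVT2[OF assms(2) d] by blast
  have c0: "0 < cos z" using z assms by (intro cos_gt_zero_pi) auto
  have c1: "cos z < 1" using cos_monotone_0_pi[of 0 z] z assms pi_gt3 by auto
  have "(cos z)\<^sup>2 < 1" using c0 c1 by (simp add: power2_eq_square) (metis c0 less_trans mult_less_cancel_right1 mult_strict_left_mono mult_1_right) 
  then have "inverse ((cos z)\<^sup>2) > 1" using c0 by (simp add: one_less_inverse)
  then have "(b - a) * (inverse ((cos z)\<^sup>2) - 1) > 0" using assms by simp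
  with z show ?thesis by simp
qed

lemma polar_of_pos:
  fixes x y :: real
  assumes "0 < x"
  shows "x = (x * sqrt (1 + (y/x)\<^sup>2)) * cos (arctan (y/x)) \<and> y = (x * sqrt (1 + (y/x)\<^sup>2)) * sin (arctan (y/x))
     \<and> x * sqrt (1 + (y/x)\<^sup>2) > 0"
proof -
  have s: "sqrt (1 + (y/x)\<^sup>2) > 0" by (simp add: add_pos_nonneg)
  show ?thesis using assms s by (simp add: cos_arctan sin_arctan)
qed

lemma angle_first_quadrant:
  fixes x y t1 t2 :: real
  assumes "0 \<le> t1" "t1 < t2" "t2 \<le> pi/2" "0 < x" "tan t1 < y / x" "t2 < pi/2 \<Longrightarrow> y / x < tan t2"
  shows "\<exists>\<rho> \<phi>. \<rho> > 0 \<and> t1 < \<phi> \<and> \<phi> < t2 \<and> x = \<rho> * cos \<phi> \<and> y = \<rho> * sin \<phi>"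
proof (rule exI[of _ "x * sqrt (1 + (y/x)\<^sup>2)"], rule exI[of _ "arctan (y/x)"], intro conjI)
  have "arctan (tan t1) < arctan (y/x)" using assms by (simp add: arctan_less_iff)
  then show "t1 < arctan (y/x)" using assms by (simp add: arctan_tan)
  show "arctan (y/x) < t2"
  proof (cases "t2 < pi/2")
    case True
    have "arctan (y/x) < arctan (tan t2)" using assms True by (simp add: arctan_less_iff)
    then show ?thesis using assms True pi_gt3 by (simp add: arctan_tan)
  next
    case False
    then show ?thesis using arctan_ubound[of "y/x"] assms by simp
  qed
qed (use polar_of_pos[OF assms(4), of y] in auto)

lemma tan_nonneg: "0 \<le> x \<Longrightarrow> x < pi/2 \<Longrightarrow> 0 \<le> tan x"
proof (cases "x = 0")
  case False
  assume "0 \<le> x" "x < pi/2"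
  with False have "0 < tan x" by (intro tan_gt_zero) auto
  then show ?thesis by simp
qed simp

lemma low_case:
  fixes p1 p2 :: real
  assumes "0 \<le> p1" "p1 < p2" "p2 \<le> pi/4" "p2 - p1 \<le> arctan (1/2)"
  shows "(\<exists>\<rho> \<phi>. \<rho> > 0 \<and> p1 < \<phi> \<and> \<phi> < p2 \<and> real_of_int \<lceil>1/(p2-p1)\<rceil> = \<rho> * cos \<phi>
            \<and> real_of_int \<lfloor>tan p1 * real_of_int \<lceil>1/(p2-p1)\<rceil> + 1\<rfloor> = \<rho> * sin \<phi>)
     \<and> 0 \<le> \<lfloor>tan p1 * real_of_int \<lceil>1/(p2-p1)\<rceil> + 1\<rfloor>
     \<and> \<lfloor>tan p1 * real_of_int \<lceil>1/(p2-p1)\<rceil> + 1\<rfloor> \<le> \<lceil>1/(p2-p1)\<rceil>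
     \<and> real_of_int \<lceil>1/(p2-p1)\<rceil> \<le> 1/(p2-p1) + 1"
proof -
  define W where "W = p2 - p1"
  define d where "d = \<lceil>1/W\<rceil>"
  define m where "m = \<lfloor>tan p1 * real_of_int d + 1\<rfloor>"
  have W0: "W > 0" using assms by (simp add: W_def)
  have dge: "real_of_int d \<ge> 1/W" unfolding d_def by (rule le_of_int_ceiling)
  have dle: "real_of_int d \<le> 1/W + 1" unfolding d_def using ceiling_correct[of "1/W"] by linarith
  have dpos: "real_of_int d > 0" using dge W0 by (smt (verit) divide_pos_pos)
  have Wd: "W * real_of_int d \<ge> 1" using dge W0 by (simp add: field_simps)
  have pi4: "pi/4 < pi/2" using pi_gt3 by simp
  have t1: "0 \<le> tan p1" using assms pi4 by (intro tan_nonneg) auto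
  have t12: "tan p2 - tan p1 > W" unfolding W_def using assms pi4 by (intro tan_diff_gt) auto
  have t2: "tan p2 \<le> 1"
  proof (cases "p2 = pi/4")
    case True then show ?thesis by (simp only: True tan_45)
  next
    case False
    then have "tan p2 < tan (pi/4)" using assms pi_gt3 by (intro tan_monotone) auto
    then show ?thesis by (simp add: tan_45)
  qed
  have mlo: "real_of_int m > tan p1 * real_of_int d" unfolding m_def using floor_correct[of "tan p1 * real_of_int d + 1"] by linarith
  have mhi: "real_of_int m \<le> tan p1 * real_of_int d + 1" unfolding m_def by (rule of_int_floor_le)
  have "real_of_int m < tan p2 * real_of_int d"
  proof -
    have "tan p1 * real_of_int d + 1 \<le> tan p1 * real_of_int d + W * real_of_int d" using Wd by simp
    also have "\<dots> = (tan p1 + W) * real_of_int d" by (simp add: algebra_simps)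
    also have "\<dots> < tan p2 * real_of_int d" using t12 dpos by (intro mult_strict_right_mono) auto
    finally show ?thesis using mhi by simp
  qed
  then have A: "(\<exists>\<rho> \<phi>. \<rho> > 0 \<and> p1 < \<phi> \<and> \<phi> < p2 \<and> real_of_int d = \<rho> * cos \<phi> \<and> real_of_int m = \<rho> * sin \<phi>)"
    using assms pi4 dpos mlo by (intro angle_first_quadrant) (auto simp: field_simps)
  have m0: "0 \<le> m" using mlo t1 dpos by (smt (verit) mult_nonneg_nonneg of_int_0_le_iff)
  have "real_of_int m < real_of_int d + 1"
  proof -
    have "tan p1 < 1" using t12 t2 W0 by linarith
    then have "tan p1 * real_of_int d < real_of_int d" using dpos by simp
    then show ?thesis using mhi by linarith
  qed
  then have md: "m \<le> d" by linarith
  show ?thesis using A m0 md dle unfolding m_def d_def W_def by simp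
qed

lemma angle_pt:
  fixes x y t1 t2 :: real
  assumes "0 < x" "t1 < arctan (y/x)" "arctan (y/x) < t2"
  shows "\<exists>\<rho> \<phi>. \<rho> > 0 \<and> t1 < \<phi> \<and> \<phi> < t2 \<and> x = \<rho> * cos \<phi> \<and> y = \<rho> * sin \<phi>"
  using polar_of_pos[OF assms(1), of y] assms by blast

lemma div_bound_helper:
  fixes W K c :: real
  assumes "W > 0" "c * W \<le> K"
  shows "c \<le> K / W"
  using assms by (simp add: field_simps)

lemma P1_prop:
  fixes t1 t2 :: real
  assumes a: "0 \<le> t1" "t1 < t2" "t2 \<le> pi/2"
  shows "(\<exists>\<rho> \<phi>. \<rho> > 0 \<and> t1 < \<phi> \<and> \<phi> < t2 \<and> real_of_int (fst (P1 t1 t2)) = \<rho> * cos \<phi>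
            \<and> real_of_int (snd (P1 t1 t2)) = \<rho> * sin \<phi>)
     \<and> 0 \<le> fst (P1 t1 t2) \<and> 0 \<le> snd (P1 t1 t2)
     \<and> (\<forall>K. pi/2 \<le> K \<longrightarrow> t2 - t1 \<le> K \<longrightarrow>
            real_of_int (fst (P1 t1 t2)) \<le> K / (t2 - t1) \<and> real_of_int (snd (P1 t1 t2)) \<le> K / (t2 - t1))"
proof -
  define A where "A = arctan (1/2::real)"
  note AF = A_facts[folded A_def]
  define W where "W = t2 - t1"
  have W0: "W > 0" using a by (simp add: W_def)
  have one: "\<forall>K. W \<le> K \<longrightarrow> (1::real) \<le> K / W" using W0 by (auto intro: div_bound_helper)
  have two: "\<forall>K. pi/2 \<le> K \<longrightarrow> W \<le> pi/4 \<longrightarrow> (2::real) \<le> K / W" using W0 by (auto intro: div_bound_helper)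
  have pt11: "\<exists>\<rho> \<phi>. \<rho> > 0 \<and> t1 < \<phi> \<and> \<phi> < t2 \<and> (1::real) = \<rho> * cos \<phi> \<and> (1::real) = \<rho> * sin \<phi>"
    if "t1 < pi/4" "pi/4 < t2" using that by (intro angle_pt) (auto simp: arctan_one)
  show ?thesis
  proof (cases "W > pi/4")
    case True
    then have "t1 < pi/4" "pi/4 < t2" using a W_def by auto
    then show ?thesis using pt11 True one unfolding P1_def Let_def W_def by auto
  next
    case c1: False
    show ?thesis
    proof (cases "W > A")
      case c2: True
      have ub: "\<forall>K. pi/2 \<le> K \<longrightarrow> W \<le> K \<longrightarrow> (1::real) \<le> K / W \<and> (2::real) \<le> K / W"
        using one two c1 by auto
      have P: "P1 t1 t2 = (if t1 \<ge> pi / 4 then (1, 2) else if t1 \<ge> A then (1, 1) else (2, 1))"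
        using c1 c2 unfolding P1_def Let_def W_def A_def by auto
      show ?thesis
      proof (cases "t1 \<ge> pi/4")
        case True
        have "t1 < arctan (2/1)" using c2 AF a by (simp add: W_def)
        moreover have "arctan (2/1) < t2" using c2 AF True by (simp add: W_def)
        ultimately have "\<exists>\<rho> \<phi>. \<rho> > 0 \<and> t1 < \<phi> \<and> \<phi> < t2 \<and> (1::real) = \<rho> * cos \<phi> \<and> (2::real) = \<rho> * sin \<phi>"
          by (intro angle_pt) auto
        then show ?thesis using P True ub by (auto simp: W_def)
      next
        case f: False
        show ?thesis
        proof (cases "t1 \<ge> A")
          case True
          have "t1 < pi/4" "pi/4 < t2" using f True c2 AF by (auto simp: W_def)
          then show ?thesis using pt11 P f True ub by (auto simp: W_def)
        next
          case False
          have "t1 < arctan (1/2)" "arctan (1/2) < t2" using False c2 AF a by (auto simp: W_def A_def)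
          then have "\<exists>\<rho> \<phi>. \<rho> > 0 \<and> t1 < \<phi> \<and> \<phi> < t2 \<and> (2::real) = \<rho> * cos \<phi> \<and> (1::real) = \<rho> * sin \<phi>"
            by (intro angle_pt) auto
          then show ?thesis using P f False ub by (auto simp: W_def)
        qed
      qed
    next
      case c2: False
      have lowb: "\<forall>K. pi/2 \<le> K \<longrightarrow> 1/W + 1 \<le> K / W"
      proof (intro allI impI)
        fix K :: real assume "pi/2 \<le> K"
        then have "1 + W \<le> K" using c2 AF pi_gt3 by linarith
        moreover have "(1/W + 1) * W = 1 + W" using W0 by (simp add: field_simps)
        ultimately have "(1/W + 1) * W \<le> K" by simp
        then show "1/W + 1 \<le> K / W" using W0 by (intro div_bound_helper)
      qed
      show ?thesis
      proof (cases "t2 \<le> pi/4")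
        case True
        have L0: "0 \<le> t1" "t1 < t2" "t2 \<le> pi/4" "t2 - t1 \<le> arctan (1/2)" using True a c2 by (auto simp: W_def A_def)
        note L = low_case[OF L0]
        have P: "P1 t1 t2 = (\<lceil>1/(t2-t1)\<rceil>, \<lfloor>tan t1 * real_of_int \<lceil>1/(t2-t1)\<rceil> + 1\<rfloor>)"
          using c1 c2 True unfolding P1_def Let_def W_def A_def by auto
        define d where "d = \<lceil>1/(t2-t1)\<rceil>"
        define m where "m = \<lfloor>tan t1 * real_of_int d + 1\<rfloor>"
        have L': "(\<exists>\<rho> \<phi>. \<rho> > 0 \<and> t1 < \<phi> \<and> \<phi> < t2 \<and> real_of_int d = \<rho> * cos \<phi> \<and> real_of_int m = \<rho> * sin \<phi>)"
           "0 \<le> m" "m \<le> d" "real_of_int d \<le> 1/W + 1" using L unfolding d_def[symmetric] m_def[symmetric] W_def by auto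
        have "real_of_int m \<le> real_of_int d" using L' by simp
        then show ?thesis unfolding P d_def[symmetric] m_def[symmetric] fst_conv snd_conv
        proof (intro conjI allI impI)
          fix K :: real assume K: "pi/2 \<le> K"
          have "real_of_int d \<le> K / (t2 - t1)" using L'(4) lowb K by (auto simp: W_def)
          then show "real_of_int d \<le> K / (t2 - t1)" "real_of_int m \<le> K / (t2 - t1)"
            using \<open>real_of_int m \<le> real_of_int d\<close> by auto
        qed (use L' in auto)
      next
        case f: False
        show ?thesis
        proof (cases "t1 < pi/4")
          case True
          have P: "P1 t1 t2 = (1,1)" using c1 c2 f True unfolding P1_def Let_def W_def A_def by auto
          show ?thesis unfolding P using pt11 True f one lowb by (auto simp: W_def)
        next
          case False
          define p1 where "p1 = pi/2 - t2"
          define p2 where "p2 = pi/2 - t1"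
          have pw: "p2 - p1 = t2 - t1" by (simp add: p1_def p2_def)
          have L0: "0 \<le> p1" "p1 < p2" "p2 \<le> pi/4" "p2 - p1 \<le> arctan (1/2)" using False a c2 unfolding pw by (auto simp: W_def A_def p1_def p2_def)
          note L = low_case[OF L0]
          have P: "P1 t1 t2 = (\<lfloor>tan p1 * real_of_int \<lceil>1/(p2-p1)\<rceil> + 1\<rfloor>, \<lceil>1/(p2-p1)\<rceil>)"
            using c1 c2 f False unfolding P1_def Let_def W_def A_def pw by (auto simp: p1_def)
          have ang: "\<exists>\<rho> \<phi>. \<rho> > 0 \<and> t1 < \<phi> \<and> \<phi> < t2 \<and> real_of_int (fst (P1 t1 t2)) = \<rho> * cos \<phi>
            \<and> real_of_int (snd (P1 t1 t2)) = \<rho> * sin \<phi>"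
          proof -
            obtain \<rho> \<phi> where r: "\<rho> > 0" "p1 < \<phi>" "\<phi> < p2" "real_of_int \<lceil>1/(p2-p1)\<rceil> = \<rho> * cos \<phi>"
               "real_of_int \<lfloor>tan p1 * real_of_int \<lceil>1/(p2-p1)\<rceil> + 1\<rfloor> = \<rho> * sin \<phi>" using L by blast
            have cs: "cos (pi/2 - \<phi>) = sin \<phi>" "sin (pi/2 - \<phi>) = cos \<phi>"
              by (simp add: sin_cos_eq, simp add: cos_sin_eq)
            show ?thesis
              by (rule exI[of _ \<rho>], rule exI[of _ "pi/2 - \<phi>"]) (use r in \<open>auto simp: P p1_def p2_def cs\<close>)
          qed
          define d where "d = \<lceil>1/(p2-p1)\<rceil>"
          define m where "m = \<lfloor>tan p1 * real_of_int d + 1\<rfloor>"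
          have L'': "0 \<le> m \<and> m \<le> d \<and> real_of_int d \<le> 1/(p2-p1) + 1" using L unfolding d_def[symmetric] m_def[symmetric] by blast
          have L': "0 \<le> m" "m \<le> d" "real_of_int d \<le> 1/W + 1" using L'' unfolding W_def pw by auto
          have "real_of_int m \<le> real_of_int d" using L' by simp
          note ang' = ang[unfolded P d_def[symmetric] m_def[symmetric] fst_conv snd_conv]
          then show ?thesis unfolding P d_def[symmetric] m_def[symmetric] fst_conv snd_conv
          proof (intro conjI allI impI)
            fix K :: real assume K: "pi/2 \<le> K"
            have "real_of_int d \<le> K / (t2 - t1)" using L'(3) lowb K by (auto simp: W_def)
            then show "real_of_int d \<le> K / (t2 - t1)" "real_of_int m \<le> K / (t2 - t1)"
              using \<open>real_of_int m \<le> real_of_int d\<close> by auto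
          qed (use L' ang' in auto)
        qed
      qed
    qed
  qed
qed

lemma P2_prop:
  fixes b1 b2 :: real
  assumes a: "0 \<le> b1" "b1 < b2" "b2 \<le> pi"
  shows "(\<exists>\<rho> \<phi>. \<rho> > 0 \<and> b1 < \<phi> \<and> \<phi> < b2 \<and> real_of_int (fst (P2 b1 b2)) = \<rho> * cos \<phi>
            \<and> real_of_int (snd (P2 b1 b2)) = \<rho> * sin \<phi>)
     \<and> 0 \<le> snd (P2 b1 b2)
     \<and> (\<forall>K. pi/2 \<le> K \<longrightarrow> b2 - b1 \<le> K \<longrightarrow>
            \<bar>real_of_int (fst (P2 b1 b2))\<bar> \<le> K / (b2 - b1) \<and> real_of_int (snd (P2 b1 b2)) \<le> K / (b2 - b1))"
proof (cases "b1 < pi/2 \<and> pi/2 < b2")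
  case True
  have P: "P2 b1 b2 = (0, 1)" using True by (simp add: P2_def)
  have "\<exists>\<rho> \<phi>. \<rho> > 0 \<and> b1 < \<phi> \<and> \<phi> < b2 \<and> (0::real) = \<rho> * cos \<phi> \<and> (1::real) = \<rho> * sin \<phi>"
    by (rule exI[of _ 1], rule exI[of _ "pi/2"]) (use True in auto)
  moreover have "\<forall>K. b2 - b1 \<le> K \<longrightarrow> (1::real) \<le> K / (b2 - b1)" using a by (auto intro: div_bound_helper)
  ultimately show ?thesis unfolding P by auto
next
  case F: False
  show ?thesis
  proof (cases "b2 \<le> pi/2")
    case True
    have P: "P2 b1 b2 = P1 b1 b2" using True F by (auto simp: P2_def)
    show ?thesis unfolding P using P1_prop[of b1 b2] a True by auto
  next
    case False
    then have b1: "pi/2 \<le> b1" using F by auto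
    have P: "P2 b1 b2 = (- fst (P1 (pi - b2) (pi - b1)), snd (P1 (pi - b2) (pi - b1)))" using False F by (auto simp: P2_def)
    have w: "(pi - b1) - (pi - b2) = b2 - b1" by simp
    have L0: "0 \<le> pi - b2" "pi - b2 < pi - b1" "pi - b1 \<le> pi/2" using a b1 by auto
    note L = P1_prop[OF L0, unfolded w]
    define x where "x = fst (P1 (pi - b2) (pi - b1))"
    define y where "y = snd (P1 (pi - b2) (pi - b1))"
    obtain \<rho> \<phi> where r: "\<rho> > 0" "pi - b2 < \<phi>" "\<phi> < pi - b1" "real_of_int x = \<rho> * cos \<phi>" "real_of_int y = \<rho> * sin \<phi>"
      using L unfolding x_def[symmetric] y_def[symmetric] by blast
    have xy: "0 \<le> x" "0 \<le> y" "\<forall>K. pi/2 \<le> K \<longrightarrow> b2 - b1 \<le> K \<longrightarrow> real_of_int x \<le> K / (b2 - b1) \<and> real_of_int y \<le> K / (b2 - b1)"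
      using L unfolding x_def[symmetric] y_def[symmetric] by auto
    have ang: "\<exists>\<rho> \<phi>. \<rho> > 0 \<and> b1 < \<phi> \<and> \<phi> < b2 \<and> real_of_int (- x) = \<rho> * cos \<phi> \<and> real_of_int y = \<rho> * sin \<phi>"
      by (rule exI[of _ \<rho>], rule exI[of _ "pi - \<phi>"]) (use r in auto)
    show ?thesis unfolding P x_def[symmetric] y_def[symmetric] fst_conv snd_conv
      using ang xy by auto
  qed
qed




lemma walk_succ: "walk E xs \<longleftrightarrow> xs \<noteq> [] \<and> successively (\<lambda>a b. (a, b) \<in> E) xs"
  unfolding walk_def successively_conv_nth by (auto simp: less_diff_conv)

lemma succ_less_distinct:
  fixes f :: "'a \<Rightarrow> real"
  shows "successively (\<lambda>a b. f a < f b) xs \<Longrightarrow> distinct xs"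
proof -
  have "successively (\<lambda>a b. f a < f b) xs \<longleftrightarrow> sorted_wrt (\<lambda>a b. f a < f b) xs"
    by (rule successively_conv_sorted_wrt) (auto simp: transp_def)
  moreover have "sorted_wrt (\<lambda>a b. f a < f b) xs \<Longrightarrow> distinct xs"
    by (induction xs) auto
  ultimately show "successively (\<lambda>a b. f a < f b) xs \<Longrightarrow> distinct xs" by blast
qed

locale tctx =
  fixes V :: "'a set" and E :: "('a \<times> 'a) set" and r :: 'a
  assumes tree: "is_tree V E" and rV: "r \<in> V"
begin

lemma finV: "finite V" and EV: "E \<subseteq> V \<times> V" and symE: "sym E" and irr: "(x, x) \<notin> E"
  and conn: "u \<in> V \<Longrightarrow> v \<in> V \<Longrightarrow> (u, v) \<in> E\<^sup>*" and cardE: "card E = 2 * (card V - 1)"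
  using tree unfolding is_tree_def by auto

lemma finE: "finite E" using EV finV by (meson finite_SigmaI finite_subset)

definition dist :: "'a \<Rightarrow> nat" where "dist v = (LEAST k. (r, v) \<in> E ^^ k)"

lemma dist_ex: "v \<in> V \<Longrightarrow> (r, v) \<in> E ^^ dist v"
  unfolding dist_def using conn[OF rV] by (metis LeastI rtrancl_power)

lemma dist_le: "(r, v) \<in> E ^^ k \<Longrightarrow> dist v \<le> k"
  unfolding dist_def by (rule Least_le)

lemma dist_r: "dist r = 0"
  using dist_le[of r 0] by simp

lemma dist0: "v \<in> V \<Longrightarrow> dist v = 0 \<Longrightarrow> v = r"
  using dist_ex[of v] by simp

lemma par_ex: assumes "v \<in> V" "v \<noteq> r" shows "\<exists>u. (u, v) \<in> E \<and> Suc (dist u) = dist v"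
proof -
  obtain m where m: "dist v = Suc m" using dist0 assms by (cases "dist v") auto
  then have "(r, v) \<in> E ^^ Suc m" using dist_ex[OF assms(1)] by simp
  then obtain u where u: "(r, u) \<in> E ^^ m" "(u, v) \<in> E" by (meson relpow_Suc_E)
  have uV: "u \<in> V" using u EV by auto
  have "dist u \<le> m" using u dist_le by blast
  moreover have "(r, v) \<in> E ^^ Suc (dist u)" using dist_ex[OF uV] u(2) by auto
  then have "dist v \<le> Suc (dist u)" by (rule dist_le)
  ultimately show ?thesis using u m by (intro exI[of _ u]) auto
qed

definition par :: "'a \<Rightarrow> 'a" where "par v = (SOME u. (u, v) \<in> E \<and> Suc (dist u) = dist v)"

lemma par: assumes "v \<in> V" "v \<noteq> r"
  shows "(par v, v) \<in> E" "Suc (dist (par v)) = dist v" "par v \<in> V"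
proof -
  have "(par v, v) \<in> E \<and> Suc (dist (par v)) = dist v"
    unfolding par_def using someI_ex[OF par_ex[OF assms]] .
  then show "(par v, v) \<in> E" "Suc (dist (par v)) = dist v" using EV by auto
  then show "par v \<in> V" using EV by auto
qed

definition PE :: "('a \<times> 'a) set" where "PE = (\<lambda>v. (par v, v)) ` (V - {r})"

lemma PE_iff: "(a, b) \<in> PE \<longleftrightarrow> b \<in> V \<and> b \<noteq> r \<and> a = par b"
  unfolding PE_def by auto

lemma E_eq: "E = PE \<union> PE\<inverse>"
proof -
  have sub: "PE \<union> PE\<inverse> \<subseteq> E"
    using par(1) symE unfolding PE_def by (auto dest: symD)
  have c1: "card PE = card V - 1"
  proof -
    have "inj_on (\<lambda>v. (par v, v)) (V - {r})" by (auto intro: inj_onI)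
    then have "card PE = card (V - {r})" unfolding PE_def by (rule card_image)
    then show ?thesis using rV finV by simp
  qed
  have c2: "card (PE\<inverse>) = card V - 1" using c1 by simp
  have disj: "PE \<inter> PE\<inverse> = {}"
  proof (rule ccontr)
    assume "PE \<inter> PE\<inverse> \<noteq> {}"
    then obtain a b where "(a, b) \<in> PE" "(b, a) \<in> PE" by auto
    then have ab: "b \<in> V" "b \<noteq> r" "a = par b" "a \<in> V" "a \<noteq> r" "b = par a" unfolding PE_iff by auto
    have "Suc (dist a) = dist b" by (subst ab(3)) (rule par(2)[OF ab(1,2)])
    moreover have "Suc (dist b) = dist a" by (subst ab(6)) (rule par(2)[OF ab(4,5)])
    ultimately show False by simp
  qed
  have fPE: "finite PE" unfolding PE_def using finV by simp
  have "card (PE \<union> PE\<inverse>) = 2 * (card V - 1)"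
    using card_Un_disjoint[OF fPE _ disj] fPE c1 c2 by simp
  then have "card (PE \<union> PE\<inverse>) = card E" using cardE by simp
  then show ?thesis using card_subset_eq[OF finE sub] by simp
qed

lemma edge_cases: "(a, b) \<in> E \<Longrightarrow> (b \<in> V \<and> b \<noteq> r \<and> a = par b) \<or> (a \<in> V \<and> a \<noteq> r \<and> b = par a)"
  using E_eq PE_iff by auto

definition D :: "'a \<Rightarrow> 'a set" where "D u = {v. (u, v) \<in> PE\<^sup>*}"

lemma D_refl[simp]: "u \<in> D u" unfolding D_def by simp

lemma D_dist: "v \<in> D u \<Longrightarrow> dist u \<le> dist v \<and> (v \<noteq> u \<longrightarrow> dist u < dist v)"
  unfolding D_def mem_Collect_eq
proof (induction rule: rtrancl_induct)
  case (step y z)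
  then have "Suc (dist y) = dist z" using par(2) PE_iff by auto
  then show ?case using step by auto
qed simp

lemma D_eq_dist: "v \<in> D u \<Longrightarrow> dist v = dist u \<Longrightarrow> v = u"
  using D_dist by fastforce

lemma D_V: assumes "u \<in> V" "v \<in> D u" shows "v \<in> V"
  using assms(2) unfolding D_def mem_Collect_eq by (induction rule: rtrancl_induct) (auto simp: PE_iff assms(1))

lemma D_par: assumes "v \<in> D u" "v \<noteq> u" shows "par v \<in> D u" "v \<in> V" "v \<noteq> r"
proof -
  from assms obtain y where "(u, y) \<in> PE\<^sup>*" "(y, v) \<in> PE" unfolding D_def mem_Collect_eq by (blast elim: rtranclE)
  then show "par v \<in> D u" "v \<in> V" "v \<noteq> r" unfolding D_def PE_iff by auto
qed

lemma D_trans: "w \<in> D v \<Longrightarrow> v \<in> D u \<Longrightarrow> w \<in> D u"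
  unfolding D_def by auto

lemma D_parI: "c \<in> V \<Longrightarrow> c \<noteq> r \<Longrightarrow> c \<in> D (par c)"
  unfolding D_def using PE_iff by auto

lemma D_child: assumes "v \<in> D u" "v \<noteq> u" shows "\<exists>c. c \<in> V \<and> c \<noteq> r \<and> par c = u \<and> v \<in> D c"
proof -
  from assms obtain c where "(u, c) \<in> PE" "(c, v) \<in> PE\<^sup>*" unfolding D_def mem_Collect_eq by (blast elim: converse_rtranclE)
  then show ?thesis unfolding D_def PE_iff by auto
qed

lemma D_anc: "v \<in> D u \<Longrightarrow> (par ^^ (dist v - dist u)) v = u"
  unfolding D_def mem_Collect_eq
proof (induction rule: rtrancl_induct)
  case (step y z)
  then have z: "Suc (dist y) = dist z" "y = par z" using par(2) PE_iff by auto
  have "dist u \<le> dist y" using step(1) D_dist unfolding D_def mem_Collect_eq by auto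
  then have "dist z - dist u = Suc (dist y - dist u)" using z by simp
  then show ?case using step z by (simp add: funpow_swap1)
qed simp

lemma tree_induct:
  assumes "Q r" "\<And>x. x \<in> V \<Longrightarrow> x \<noteq> r \<Longrightarrow> Q (par x) \<Longrightarrow> Q x" "x \<in> V"
  shows "Q x"
proof -
  have "\<forall>x\<in>V. dist x = k \<longrightarrow> Q x" for k
  proof (induction k)
    case 0 then show ?case using dist0 assms(1) by auto
  next
    case (Suc k)
    show ?case
    proof (intro ballI impI)
      fix x assume x: "x \<in> V" "dist x = Suc k"
      then have xr: "x \<noteq> r" using dist_r by auto
      then have "par x \<in> V" "dist (par x) = k" using par[OF x(1) xr] x by auto
      then have "Q (par x)" using Suc by blast
      then show "Q x" using assms(2) x xr by blast
    qed
  qed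
  then show ?thesis using assms(3) by blast
qed

lemma D_r: assumes "x \<in> V" shows "x \<in> D r"
proof (rule tree_induct[of "\<lambda>x. x \<in> D r", OF _ _ assms])
  fix y assume y: "y \<in> V" "y \<noteq> r" "par y \<in> D r"
  have "y \<in> D (par y)" using D_parI[OF y(1,2)] .
  then show "y \<in> D r" using D_trans[OF _ y(3)] by blast
qed simp

fun upl :: "'a \<Rightarrow> nat \<Rightarrow> 'a list" where
  "upl x 0 = [x]"
| "upl x (Suc k) = x # upl (par x) k"

lemma upl_ne[simp]: "upl x k \<noteq> []" by (cases k) auto
lemma upl_hd[simp]: "hd (upl x k) = x" by (cases k) auto
lemma upl_last: "last (upl x k) = (par ^^ k) x"
  by (induction k arbitrary: x) (auto simp: funpow_swap1)

lemma upl_chain: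
  assumes "x \<in> D c" "k \<le> dist x - dist c"
  shows "set (upl x k) \<subseteq> D c \<and> successively (\<lambda>a b. b = par a \<and> a \<in> D c \<and> a \<noteq> c) (upl x k)"
  using assms
proof (induction k arbitrary: x)
  case (Suc k)
  then have "x \<noteq> c" by auto
  then have p: "par x \<in> D c" "x \<in> V" "x \<noteq> r" using D_par Suc by auto
  have "k \<le> dist (par x) - dist c" using Suc par(2)[OF p(2,3)] by simp
  then show ?case using Suc p \<open>x \<noteq> c\<close> by (auto simp: successively_Cons)
qed simp

lemma upl_to_anc: "x \<in> D c \<Longrightarrow> last (upl x (dist x - dist c)) = c"
  using upl_last D_anc by simp

lemma E_cross: assumes "(a, b) \<in> E" "a \<notin> D u" "b \<in> D u" shows "b = u"
proof (rule ccontr)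
  assume ne: "b \<noteq> u"
  from edge_cases[OF assms(1)] show False
  proof
    assume "b \<in> V \<and> b \<noteq> r \<and> a = par b"
    then show False using D_par[OF assms(3) ne] assms(2) by auto
  next
    assume "a \<in> V \<and> a \<noteq> r \<and> b = par a"
    then have "a \<in> D b" using D_parI by auto
    then show False using D_trans assms by blast
  qed
qed

lemma walk_cross: "successively (\<lambda>a b. (a, b) \<in> E) xs \<Longrightarrow> xs \<noteq> [] \<Longrightarrow> last xs \<in> D u \<Longrightarrow> hd xs \<notin> D u \<Longrightarrow> u \<in> set xs"
proof (induction xs)
  case Nil then show ?case by simp
next
  case (Cons a ys)
  note IH = Cons.IH and pr = Cons.prems
  show ?case
  proof (cases ys)
    case Nil
    then have False using pr by simp
    then show ?thesis ..
  next
    fix b zs assume ys: "ys = b # zs"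
    have ab: "(a, b) \<in> E" and sy: "successively (\<lambda>a b. (a, b) \<in> E) ys" using pr(1) ys by auto
    have la: "last ys \<in> D u" using pr(3) ys by simp
    have a: "a \<notin> D u" using pr(4) by simp
    show ?thesis
    proof (cases "b \<in> D u")
      case True
      then have "b = u" using E_cross[OF ab a] by blast
      then show ?thesis using ys by simp
    next
      case False
      then have "u \<in> set ys" using IH[OF sy] ys la by simp
      then show ?thesis by simp
    qed
  qed
qed

lemma upl_desc: "x \<in> V \<Longrightarrow> k \<le> dist x \<Longrightarrow> y \<in> set (upl x k) \<Longrightarrow> x \<in> D y"
proof (induction k arbitrary: x)
  case (Suc k)
  then have xr: "x \<noteq> r" using dist_r by auto
  note p = par[OF Suc(2) xr]
  show ?case
  proof (cases "y = x")
    case False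
    then have "y \<in> set (upl (par x) k)" using Suc by auto
    then have "par x \<in> D y" using Suc p by auto
    then show ?thesis using D_parI[OF Suc(2) xr] D_trans by blast
  qed simp
qed simp

lemma r_notin_D: "u \<noteq> r \<Longrightarrow> u \<in> V \<Longrightarrow> r \<notin> D u"
  using D_dist[of r u] dist_r dist0 by auto

lemma par_edge: "a \<in> D r \<Longrightarrow> a \<noteq> r \<Longrightarrow> (par a, a) \<in> E"
  using par(1) D_V[OF rV] by blast

lemma subtree_eq: assumes "u \<in> V" shows "subtree V E r u = D u"
proof
  show "subtree V E r u \<subseteq> D u"
  proof
    fix v assume v: "v \<in> subtree V E r u"
    then have vV: "v \<in> V" unfolding subtree_def by auto
    have vr: "v \<in> D r" using D_r vV by simp
    define xs where "xs = rev (upl v (dist v - dist r))"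
    note ch = upl_chain[OF vr order_refl]
    have "successively (\<lambda>a b. (b, a) \<in> E) (upl v (dist v - dist r))"
      by (rule successively_mono[OF conjunct2[OF ch]]) (simp add: par_edge)
    then have "walk E xs"
      unfolding walk_succ xs_def by simp
    moreover have "hd xs = r" "last xs = v" unfolding xs_def
      using upl_to_anc[OF vr] by (auto simp: hd_rev last_rev)
    ultimately have "u \<in> set xs" using v unfolding subtree_def by auto
    then show "v \<in> D u" using upl_desc[OF vV, of "dist v"] unfolding xs_def dist_r by auto
  qed
next
  show "D u \<subseteq> subtree V E r u"
  proof
    fix v assume v: "v \<in> D u"
    have "u \<in> set xs" if "walk E xs" "hd xs = r" "last xs = v" for xs
    proof (cases "u = r")
      case True then show ?thesis using that by (auto simp: walk_def)
    next
      case False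
      then show ?thesis using walk_cross[of xs u] that v r_notin_D[OF False assms] unfolding walk_succ by auto
    qed
    then show "v \<in> subtree V E r u" unfolding subtree_def using D_V[OF assms v] by auto
  qed
qed

lemma children_eq: assumes "u \<in> V" shows "children V E r u = {c. c \<in> V \<and> c \<noteq> r \<and> par c = u}"
proof -
  have "c \<in> children V E r u \<longleftrightarrow> c \<in> V \<and> c \<noteq> r \<and> par c = u" for c
  proof
    assume "c \<in> children V E r u"
    then have c: "(u, c) \<in> E" "c \<in> D u" "c \<noteq> u" unfolding children_def subtree_eq[OF assms] by auto
    from edge_cases[OF c(1)] show "c \<in> V \<and> c \<noteq> r \<and> par c = u"
    proof
      assume h: "u \<in> V \<and> u \<noteq> r \<and> c = par u"
      then have "Suc (dist c) = dist u" using par(2) by auto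
      then show ?thesis using D_dist[OF c(2)] by auto
    qed auto
  next
    assume c: "c \<in> V \<and> c \<noteq> r \<and> par c = u"
    then have "Suc (dist u) = dist c" using par(2) by blast
    then have "(u, c) \<in> E" "c \<in> D u" "c \<noteq> u" using par c D_parI by auto
    then show "c \<in> children V E r u" unfolding children_def subtree_eq[OF assms] by auto
  qed
  then show ?thesis by (simp add: set_eq_iff)
qed

definition ch :: "'a \<Rightarrow> 'a set" where "ch u = {c. c \<in> V \<and> c \<noteq> r \<and> par c = u}"

lemma finD: "u \<in> V \<Longrightarrow> finite (D u)" by (rule finite_subset[OF _ finV]) (auto intro: D_V)

lemma D_decomp: assumes "u \<in> V" shows "D u = insert u (\<Union>c\<in>ch u. D c)"
proof
  show "D u \<subseteq> insert u (\<Union>c\<in>ch u. D c)"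
  proof
    fix v assume v: "v \<in> D u"
    show "v \<in> insert u (\<Union>c\<in>ch u. D c)"
    proof (cases "v = u")
      case False
      then obtain c where "c \<in> V" "c \<noteq> r" "par c = u" "v \<in> D c" using D_child v by blast
      then show ?thesis unfolding ch_def by blast
    qed simp
  qed
  show "insert u (\<Union>c\<in>ch u. D c) \<subseteq> D u"
    using D_parI D_trans unfolding ch_def by fastforce
qed

lemma D_disj: assumes "c \<in> ch u" "c' \<in> ch u" "c \<noteq> c'" shows "D c \<inter> D c' = {}"
proof (rule ccontr)
  assume "D c \<inter> D c' \<noteq> {}"
  then obtain w where w: "w \<in> D c" "w \<in> D c'" by auto
  have cc: "c \<in> V" "c \<noteq> r" "par c = u" "c' \<in> V" "c' \<noteq> r" "par c' = u" using assms unfolding ch_def by auto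
  have "Suc (dist (par c)) = dist c" using par(2)[OF cc(1,2)] .
  moreover have "Suc (dist (par c')) = dist c'" using par(2)[OF cc(4,5)] .
  ultimately have "dist c = dist c'" using cc by simp
  then show False using D_anc[OF w(1)] D_anc[OF w(2)] assms(3) by simp
qed

lemma card_D: assumes "u \<in> V" shows "real (card (D u)) - 1 = (\<Sum>c\<in>ch u. real (card (D c)))"
proof -
  have fch: "finite (ch u)" unfolding ch_def using finV by simp
  have chV: "c \<in> ch u \<Longrightarrow> c \<in> V" for c unfolding ch_def by auto
  have "u \<notin> (\<Union>c\<in>ch u. D c)"
  proof
    assume "u \<in> (\<Union>c\<in>ch u. D c)"
    then obtain c where "c \<in> ch u" "u \<in> D c" by auto
    then show False using D_dist[of u c] par(2)[of c] unfolding ch_def by auto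
  qed
  then have "card (D u) = Suc (card (\<Union>c\<in>ch u. D c))"
    using D_decomp[OF assms] fch finD chV by (subst D_decomp[OF assms]) (auto intro!: card_insert_disjoint)
  moreover have "card (\<Union>c\<in>ch u. D c) = (\<Sum>c\<in>ch u. card (D c))"
    using fch finD chV D_disj by (intro card_UN_disjoint) auto
  ultimately show ?thesis by simp
qed

lemma lca: assumes "u \<in> V" "v \<in> V" "u \<notin> D v" "v \<notin> D u"
  shows "\<exists>c c'. c \<in> V \<and> c \<noteq> r \<and> c' \<in> V \<and> c' \<noteq> r \<and> c \<noteq> c' \<and> par c = par c' \<and> u \<in> D c \<and> v \<in> D c'"
  using assms
proof (induction "dist u" arbitrary: u rule: less_induct)
  case less
  have ur: "u \<noteq> r" using less D_r by auto
  note p = par[OF less(2) ur]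
  have uD: "u \<in> D (par u)" using D_parI less ur by auto
  show ?case
  proof (cases "v \<in> D (par u)")
    case True
    have "v \<noteq> par u" using uD less by auto
    then obtain c' where c': "c' \<in> V" "c' \<noteq> r" "par c' = par u" "v \<in> D c'" using D_child True by blast
    have "c' \<noteq> u" using c' less by auto
    then show ?thesis using c' less(2,4) ur
      by (intro exI[of _ u] exI[of _ c'] conjI) simp_all
  next
    case False
    have "par u \<notin> D v" using uD less D_trans by blast
    have dl: "dist (par u) < dist u" using p(2) by simp
    have "\<exists>c c'. c \<in> V \<and> c \<noteq> r \<and> c' \<in> V \<and> c' \<noteq> r \<and> c \<noteq> c' \<and> par c = par c' \<and> par u \<in> D c \<and> v \<in> D c'"
      using less(1)[OF dl p(3) less(3) \<open>par u \<notin> D v\<close> False] by blast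
    then obtain c c' where cc: "c \<in> V \<and> c \<noteq> r \<and> c' \<in> V \<and> c' \<noteq> r \<and> c \<noteq> c' \<and> par c = par c' \<and> par u \<in> D c \<and> v \<in> D c'"
      by blast
    then show ?thesis using uD D_trans[of u "par u"] by metis
  qed
qed

end



lemma proj_add: "proj l (a + b) = proj l a + proj l b"
  and proj_diff: "proj l (a - b) = proj l a - proj l b"
  and proj_scale: "proj l (t *\<^sub>R a) = t * proj l a"
  and proj_neg: "proj (- l) a = - proj l a"
  unfolding proj_def by (auto simp: algebra_simps)

lemma frac_facts:
  fixes W Z A B a :: real
  assumes "W > 0" "Z > 0" "0 \<le> A" "A < B" "B \<le> Z"
  shows "a \<le> a + W * A / Z" "a + W * A / Z < a + W * B / Z" "a + W * B / Z \<le> a + W"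
proof -
  show "a \<le> a + W * A / Z" using assms by simp
  show "a + W * A / Z < a + W * B / Z" using assms by (simp add: divide_strict_right_mono)
  have "W * B / Z \<le> W * Z / Z" using assms by (intro divide_right_mono mult_left_mono) auto
  then show "a + W * B / Z \<le> a + W" using assms by simp
qed

locale actx = tctx +
  fixes chl :: "'a \<Rightarrow> 'a list" and a1 a2 :: "'a \<Rightarrow> real" and pos :: "'a \<Rightarrow> int \<times> int"
  assumes alg: "algorithm2 V E r chl a1 a2 pos"
begin

definition s :: "'a \<Rightarrow> real" where "s u = real (card (D u))"
definition W :: "'a \<Rightarrow> real" where "W u = a2 u - a1 u"

lemma grav: "gravity_root V E r" using alg unfolding algorithm2_def by auto

lemma chl: "u \<in> V \<Longrightarrow> distinct (chl u) \<and> set (chl u) = ch u"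
  using alg children_eq unfolding algorithm2_def child_order_def ch_def by auto

lemma a_r: "a1 r = 0" "a2 r = pi" using alg unfolding algorithm2_def strategy1_def by auto

lemma strat: assumes "u \<in> V" "i < length (chl u)"
  shows "a1 (chl u ! i) = (if i = 0 then a1 u else a2 (chl u ! (i - 1)))"
    "a2 (chl u ! i) = a1 (chl u ! i) + W u * s (chl u ! i) / (s u - 1)"
proof -
  have c: "chl u ! i \<in> V" using chl[OF assms(1)] assms(2) nth_mem unfolding ch_def by blast
  show "a1 (chl u ! i) = (if i = 0 then a1 u else a2 (chl u ! (i - 1)))"
    "a2 (chl u ! i) = a1 (chl u ! i) + W u * s (chl u ! i) / (s u - 1)"
    using alg assms subtree_eq[OF assms(1)] subtree_eq[OF c] unfolding algorithm2_def strategy1_def W_def s_def by auto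
qed

lemma pos_r: "pos r = (0, 0)" using alg unfolding algorithm2_def by auto

lemma pos_step: assumes "x \<in> V" "x \<noteq> r"
  shows "pos x = (fst (pos (par x)) + fst (P2 (a1 x) (a2 x)), snd (pos (par x)) + snd (P2 (a1 x) (a2 x)))"
proof -
  have "x \<in> children V E r (par x)" using children_eq[OF par(3)[OF assms]] assms by auto
  then show ?thesis using alg par(3)[OF assms] unfolding algorithm2_def by blast
qed

definition S :: "'a \<Rightarrow> nat \<Rightarrow> real" where "S u i = (\<Sum>k<i. s (chl u ! k))"

lemma s_pos: "u \<in> V \<Longrightarrow> s u \<ge> 1"
  unfolding s_def using finD[of u] D_refl[of u] by (metis card_0_eq empty_iff of_nat_1 of_nat_mono less_one not_le)

lemma S_total: assumes "u \<in> V" shows "S u (length (chl u)) = s u - 1"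
proof -
  have "S u (length (chl u)) = sum_list (map s (chl u))"
    unfolding S_def sum_list_sum_nth by (simp add: atLeast0LessThan)
  also have "\<dots> = sum s (set (chl u))" using chl[OF assms] sum.distinct_set_conv_list[of "chl u" s] by simp
  also have "\<dots> = s u - 1" using chl[OF assms] card_D[OF assms] unfolding s_def by simp
  finally show ?thesis .
qed

lemma S_mono: "i \<le> j \<Longrightarrow> u \<in> V \<Longrightarrow> j \<le> length (chl u) \<Longrightarrow> S u i \<le> S u j"
proof -
  assume a: "i \<le> j" "u \<in> V" "j \<le> length (chl u)"
  have "\<forall>k<j. s (chl u ! k) \<ge> 0" using s_pos chl[OF a(2)] a unfolding ch_def
    by (metis (mono_tags, lifting) dual_order.trans less_le_not_le mem_Collect_eq nth_mem zero_less_one less_imp_le order.strict_trans2)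
  then show ?thesis unfolding S_def using a by (intro sum_mono2) auto
qed

lemma S_Suc: "S u (Suc i) = S u i + s (chl u ! i)" unfolding S_def by simp

lemma prefix: assumes "u \<in> V" "i < length (chl u)"
  shows "a1 (chl u ! i) = a1 u + W u * S u i / (s u - 1) \<and> a2 (chl u ! i) = a1 u + W u * S u (Suc i) / (s u - 1)"
  using assms(2)
proof (induction i)
  case 0
  then show ?case using strat[OF assms(1) 0] by (simp add: S_def)
next
  case (Suc i)
  then have "a1 (chl u ! Suc i) = a1 u + W u * S u (Suc i) / (s u - 1)" using strat[OF assms(1) Suc(2)] by simp
  then show ?case using strat(2)[OF assms(1) Suc(2)] unfolding S_Suc[of u "Suc i"] by (simp add: add_divide_distrib distrib_left)
qed

lemma child_idx: assumes "x \<in> V" "x \<noteq> r" shows "\<exists>i < length (chl (par x)). chl (par x) ! i = x"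
proof -
  have "x \<in> set (chl (par x))" using chl[OF par(3)[OF assms]] assms unfolding ch_def by auto
  then show ?thesis by (simp add: in_set_conv_nth)
qed

lemma S0: "S u 0 = 0" unfolding S_def by simp

lemma child_data: assumes "x \<in> V" "x \<noteq> r"
  obtains i where "i < length (chl (par x))" "chl (par x) ! i = x"
    "a1 x = a1 (par x) + W (par x) * S (par x) i / (s (par x) - 1)"
    "a2 x = a1 (par x) + W (par x) * S (par x) (Suc i) / (s (par x) - 1)"
    "0 \<le> S (par x) i" "S (par x) (Suc i) = S (par x) i + s x" "S (par x) (Suc i) \<le> s (par x) - 1"
    "W x = W (par x) * s x / (s (par x) - 1)"
proof -
  obtain i where i: "i < length (chl (par x))" "chl (par x) ! i = x" using child_idx[OF assms] by blast
  note pV = par(3)[OF assms]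
  have "0 \<le> S (par x) i" using S_mono[of 0 i "par x"] i pV S0 by simp
  moreover have "S (par x) (Suc i) \<le> s (par x) - 1" using S_mono[of "Suc i" "length (chl (par x))" "par x"] i pV S_total[OF pV] by simp
  moreover have "W x = W (par x) * s x / (s (par x) - 1)" using strat(2)[OF pV i(1)] i(2) unfolding W_def by simp
  ultimately show ?thesis using that[OF i] prefix[OF pV i(1)] i(2) S_Suc[of "par x" i] by simp
qed

lemma s_par: assumes "x \<in> V" "x \<noteq> r" shows "s x \<le> s (par x) - 1"
  using child_data[OF assms] by (metis add_le_cancel_left add.commute order_trans le_add_same_cancel2)

lemma child_interval: assumes "x \<in> V" "x \<noteq> r" "a1 (par x) < a2 (par x)"
  shows "a1 (par x) \<le> a1 x \<and> a1 x < a2 x \<and> a2 x \<le> a2 (par x)"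
proof -
  obtain i where d: "a1 x = a1 (par x) + W (par x) * S (par x) i / (s (par x) - 1)"
    "a2 x = a1 (par x) + W (par x) * S (par x) (Suc i) / (s (par x) - 1)"
    "0 \<le> S (par x) i" "S (par x) (Suc i) = S (par x) i + s x" "S (par x) (Suc i) \<le> s (par x) - 1"
    using child_data[OF assms(1,2)] by metis
  have sx: "s x \<ge> 1" using s_pos assms by simp
  have W0: "W (par x) > 0" using assms(3) unfolding W_def by simp
  have Z0: "s (par x) - 1 > 0" using d sx by linarith
  have AB: "S (par x) i < S (par x) (Suc i)" using d sx by linarith
  note ff = frac_facts[OF W0 Z0 d(3) AB d(5), of "a1 (par x)"]
  show ?thesis using ff d unfolding W_def by simp
qed

lemma valid: assumes "x \<in> V" shows "0 \<le> a1 x \<and> a1 x < a2 x \<and> a2 x \<le> pi"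
proof (rule tree_induct[of "\<lambda>x. 0 \<le> a1 x \<and> a1 x < a2 x \<and> a2 x \<le> pi", OF _ _ assms])
  show "0 \<le> a1 r \<and> a1 r < a2 r \<and> a2 r \<le> pi" using a_r by simp
next
  fix y assume y: "y \<in> V" "y \<noteq> r" "0 \<le> a1 (par y) \<and> a1 (par y) < a2 (par y) \<and> a2 (par y) \<le> pi"
  then show "0 \<le> a1 y \<and> a1 y < a2 y \<and> a2 y \<le> pi" using child_interval[OF y(1,2)] by linarith
qed

lemma W_pos: "x \<in> V \<Longrightarrow> W x > 0" using valid unfolding W_def by simp

lemma sib_order: assumes "c \<in> V" "c \<noteq> r" "c' \<in> V" "c' \<noteq> r" "par c = par c'" "c \<noteq> c'"
  shows "a2 c \<le> a1 c' \<or> a2 c' \<le> a1 c"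
proof -
  define p where "p = par c"
  have pV: "p \<in> V" using par(3)[OF assms(1,2)] p_def by simp
  obtain i where i: "i < length (chl p)" "chl p ! i = c" using child_idx[OF assms(1,2)] p_def by blast
  obtain j where j: "j < length (chl p)" "chl p ! j = c'" using child_idx[OF assms(3,4)] p_def assms(5) by auto
  have ij: "i \<noteq> j" using i j assms(6) by auto
  have W0: "W p > 0" using W_pos[OF pV] .
  have Z0: "s p - 1 > 0"
  proof -
    have "S p (Suc i) \<le> s p - 1" using S_mono[of "Suc i" "length (chl p)" p] i pV S_total[OF pV] by simp
    moreover have "S p (Suc i) = S p i + s c" using S_Suc i by simp
    moreover have "0 \<le> S p i" using S_mono[of 0 i p] i pV S0 by simp
    ultimately show ?thesis using s_pos[OF assms(1)] by linarith
  qed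
  have key: "a2 (chl p ! k) \<le> a1 (chl p ! l)" if "k < l" "l < length (chl p)" for k l
  proof -
    have "S p (Suc k) \<le> S p l" using S_mono[of "Suc k" l p] that pV by simp
    then have "W p * S p (Suc k) / (s p - 1) \<le> W p * S p l / (s p - 1)"
      using W0 Z0 by (intro divide_right_mono mult_left_mono) auto
    then show ?thesis using prefix[OF pV] that by simp
  qed
  show ?thesis
  proof (cases "i < j")
    case True then show ?thesis using key[OF True j(1)] i j by simp
  next
    case False then have "j < i" using ij by simp
    then show ?thesis using key[OF \<open>j < i\<close> i(1)] i j by simp
  qed
qed

lemma desc_interval: assumes "x \<in> V" "y \<in> D x" shows "a1 x \<le> a1 y \<and> a2 y \<le> a2 x"
  using assms(2) unfolding D_def mem_Collect_eq
proof (induction rule: rtrancl_induct)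
  case (step y z)
  then have z: "z \<in> V" "z \<noteq> r" "y = par z" using PE_iff by auto
  have "a1 (par z) < a2 (par z)" using valid par(3)[OF z(1,2)] by blast
  then show ?case using child_interval[OF z(1,2)] step z(3) by force
qed simp

end



context actx begin

definition rp :: "'a \<Rightarrow> real \<times> real" where "rp x = rpt pos x"
definition stp :: "'a \<Rightarrow> real \<times> real" where "stp x = rp x - rp (par x)"

lemma stp_eq: assumes "x \<in> V" "x \<noteq> r"
  shows "stp x = (real_of_int (fst (P2 (a1 x) (a2 x))), real_of_int (snd (P2 (a1 x) (a2 x))))"
  using pos_step[OF assms] unfolding stp_def rp_def rpt_def by simp

lemma stp_polar: assumes "x \<in> V" "x \<noteq> r"
  shows "\<exists>\<rho> \<phi>. \<rho> > 0 \<and> a1 x < \<phi> \<and> \<phi> < a2 x \<and> stp x = \<rho> *\<^sub>R (cos \<phi>, sin \<phi>)"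
proof -
  have v: "0 \<le> a1 x" "a1 x < a2 x" "a2 x \<le> pi" using valid[OF assms(1)] by auto
  obtain \<rho> \<phi> where r: "\<rho> > 0" "a1 x < \<phi>" "\<phi> < a2 x"
    "real_of_int (fst (P2 (a1 x) (a2 x))) = \<rho> * cos \<phi>" "real_of_int (snd (P2 (a1 x) (a2 x))) = \<rho> * sin \<phi>"
    using P2_prop[OF v] by blast
  show ?thesis using r stp_eq[OF assms] by (intro exI[of _ \<rho>] exI[of _ \<phi>]) simp
qed

definition good :: "real \<times> real \<Rightarrow> 'a \<Rightarrow> bool" where
  "good l x \<longleftrightarrow> (\<forall>\<phi>. a1 x < \<phi> \<and> \<phi> < a2 x \<longrightarrow> 0 < proj l (cos \<phi>, sin \<phi>))"

lemma good_stp: assumes "x \<in> V" "x \<noteq> r" "good l x" shows "proj l (stp x) > 0"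
proof -
  obtain \<rho> \<phi> where r: "\<rho> > 0" "a1 x < \<phi>" "\<phi> < a2 x" "stp x = \<rho> *\<^sub>R (cos \<phi>, sin \<phi>)"
    using stp_polar[OF assms(1,2)] by blast
  have "0 < proj l (cos \<phi>, sin \<phi>)" using assms(3) r unfolding good_def by blast
  then show ?thesis unfolding r(4) proj_scale using r(1) by simp
qed

lemma good_desc: assumes "x \<in> V" "y \<in> D x" "good l x" shows "good l y"
  using desc_interval[OF assms(1,2)] assms(3) unfolding good_def by force

lemma main_pos: assumes "x \<in> V" "x \<noteq> r" "good l x" "y \<in> D x"
  shows "proj l (rp y - rp (par x)) > 0"
  using assms(4) unfolding D_def mem_Collect_eq
proof (induction rule: rtrancl_induct)
  case base
  then show ?case using good_stp[OF assms(1-3)] unfolding stp_def .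
next
  case (step y z)
  then have z: "z \<in> V" "z \<noteq> r" "y = par z" using PE_iff by auto
  have zD: "z \<in> D x" using step unfolding D_def by auto
  have "proj l (stp z) > 0" using good_stp[OF z(1,2) good_desc[OF assms(1) zD assms(3)]] .
  moreover have "rp z - rp (par x) = (rp y - rp (par x)) + stp z" unfolding stp_def z(3) by simp
  then have "proj l (rp z - rp (par x)) = proj l (rp y - rp (par x)) + proj l (stp z)" by (simp only: proj_add)
  ultimately show ?case using step.IH by linarith
qed

lemma seg_param: "q \<in> closed_segment a b \<Longrightarrow> \<exists>u. 0 \<le> u \<and> u \<le> 1 \<and> (\<forall>l. proj l q = proj l a + u * (proj l b - proj l a)) \<and> (u = 0 \<longrightarrow> q = a)"
proof -
  assume "q \<in> closed_segment a b"
  then obtain u where u: "q = (1 - u) *\<^sub>R a + u *\<^sub>R b" "0 \<le> u" "u \<le> 1" unfolding closed_segment_def by blast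
  have "proj l q = proj l a + u * (proj l b - proj l a)" for l
    unfolding u(1) proj_add proj_scale by (simp add: algebra_simps)
  moreover have "u = 0 \<longrightarrow> q = a" using u(1) by simp
  ultimately show ?thesis using u(2,3) by blast
qed

lemma seg_pos: assumes "x \<in> V" "x \<noteq> r" "good l x" "y \<in> D x" "q \<in> closed_segment (rp (par y)) (rp y)"
  shows "proj l (q - rp (par x)) > 0 \<or> (y = x \<and> q = rp (par x))"
proof -
  have yV: "y \<in> V" using D_V[OF assms(1,4)] .
  have yr: "y \<noteq> r" using assms r_notin_D by blast
  obtain u where u: "0 \<le> u" "u \<le> 1" "\<And>l. proj l q = proj l (rp (par y)) + u * (proj l (rp y) - proj l (rp (par y)))" "u = 0 \<Longrightarrow> q = rp (par y)"
    using seg_param[OF assms(5)] by blast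
  have st: "proj l (rp y) - proj l (rp (par y)) > 0" using good_stp[OF yV yr good_desc[OF assms(1,4,3)]] unfolding stp_def proj_diff .
  show ?thesis
  proof (cases "y = x")
    case False
    have "par y \<in> D x" using D_par[OF assms(4) False] by blast
    then have "proj l (rp (par y) - rp (par x)) > 0" using main_pos[OF assms(1-3)] by blast
    then show ?thesis using u(1,3) st by (simp add: proj_diff) (smt (verit) mult_nonneg_nonneg)
  next
    case True
    show ?thesis
    proof (cases "u = 0")
      case True then show ?thesis using u(4) \<open>y = x\<close> by simp
    next
      case False
      then have "u > 0" using u(1) by simp
      then have "u * (proj l (rp y) - proj l (rp (par y))) > 0" using st by simp
      then show ?thesis using u(3) \<open>y = x\<close> by (simp add: proj_diff)
    qed
  qed
qed

lemma mid_good: assumes "x \<in> V" shows "good (cos ((a1 x + a2 x)/2), sin ((a1 x + a2 x)/2)) x"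
  unfolding good_def
proof (intro allI impI)
  fix \<phi> assume p: "a1 x < \<phi> \<and> \<phi> < a2 x"
  have v: "0 \<le> a1 x" "a2 x \<le> pi" using valid[OF assms] by auto
  have p1: "a1 x < \<phi>" and p2: "\<phi> < a2 x" using p by auto
  have "- (pi/2) < \<phi> - (a1 x + a2 x)/2" using p1 p2 v by (simp add: field_simps)
  moreover have "\<phi> - (a1 x + a2 x)/2 < pi/2" using p1 p2 v by (simp add: field_simps)
  ultimately have "0 < cos (\<phi> - (a1 x + a2 x)/2)" by (rule cos_gt_zero_pi)
  then show "0 < proj (cos ((a1 x + a2 x)/2), sin ((a1 x + a2 x)/2)) (cos \<phi>, sin \<phi>)"
    unfolding proj_def by (simp add: cos_diff mult.commute)
qed

lemma sep_aux: assumes "c \<in> V" "c' \<in> V" "a2 c \<le> a1 c'"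
  shows "good (sin (a2 c), - cos (a2 c)) c \<and> good (- (sin (a2 c), - cos (a2 c))) c'"
proof -
  have v: "0 \<le> a1 c" "a1 c < a2 c" "a2 c \<le> pi" "0 \<le> a1 c'" "a1 c' < a2 c'" "a2 c' \<le> pi"
    using valid[OF assms(1)] valid[OF assms(2)] by auto
  have 1: "good (sin (a2 c), - cos (a2 c)) c" unfolding good_def
  proof (intro allI impI)
    fix \<phi> assume p: "a1 c < \<phi> \<and> \<phi> < a2 c"
    have p1: "a1 c < \<phi>" and p2: "\<phi> < a2 c" using p by auto
    have "0 < a2 c - \<phi>" "a2 c - \<phi> < pi" using p1 p2 v by linarith+
    then have "0 < sin (a2 c - \<phi>)" by (rule sin_gt_zero)
    then show "0 < proj (sin (a2 c), - cos (a2 c)) (cos \<phi>, sin \<phi>)" unfolding proj_def by (simp add: sin_diff)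
  qed
  have 2: "good (- (sin (a2 c), - cos (a2 c))) c'" unfolding good_def
  proof (intro allI impI)
    fix \<phi> assume p: "a1 c' < \<phi> \<and> \<phi> < a2 c'"
    have p1: "a1 c' < \<phi>" and p2: "\<phi> < a2 c'" using p by auto
    have "0 < \<phi> - a2 c" "\<phi> - a2 c < pi" using p1 p2 v assms(3) by linarith+
    then have "0 < sin (\<phi> - a2 c)" by (rule sin_gt_zero)
    then show "0 < proj (- (sin (a2 c), - cos (a2 c))) (cos \<phi>, sin \<phi>)" unfolding proj_def by (simp add: sin_diff mult.commute)
  qed
  show ?thesis using 1 2 by blast
qed

lemma sib_sep: assumes "c \<in> V" "c \<noteq> r" "c' \<in> V" "c' \<noteq> r" "par c = par c'" "c \<noteq> c'"
  shows "\<exists>l. good l c \<and> good (- l) c'"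
proof -
  from sib_order[OF assms] show ?thesis
  proof
    assume "a2 c \<le> a1 c'"
    then show ?thesis using sep_aux[OF assms(1,3)] by blast
  next
    assume "a2 c' \<le> a1 c"
    then have "good (sin (a2 c'), - cos (a2 c')) c' \<and> good (- (sin (a2 c'), - cos (a2 c'))) c"
      using sep_aux[OF assms(3,1)] by blast
    then show ?thesis by (intro exI[of _ "- (sin (a2 c'), - cos (a2 c'))"]) simp
  qed
qed

lemma good_ne: assumes "x \<in> V" "good l x" shows "l \<noteq> 0"
proof
  assume "l = 0"
  have "a1 x < (a1 x + a2 x)/2" "(a1 x + a2 x)/2 < a2 x" using valid[OF assms(1)] by auto
  then have "0 < proj l (cos ((a1 x + a2 x)/2), sin ((a1 x + a2 x)/2))" using assms(2) unfolding good_def by blast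
  then show False using \<open>l = 0\<close> unfolding proj_def by simp
qed

end

context actx begin

lemma seg_self_neg: assumes "y \<in> V" "y \<noteq> r" "good l y" "q \<in> closed_segment (rp (par y)) (rp y)"
  shows "proj l (q - rp y) \<le> 0"
proof -
  obtain u where u: "0 \<le> u" "u \<le> 1" "\<And>l. proj l q = proj l (rp (par y)) + u * (proj l (rp y) - proj l (rp (par y)))"
    using seg_param[OF assms(4)] by blast
  have st: "proj l (rp y) - proj l (rp (par y)) > 0" using good_stp[OF assms(1-3)] unfolding stp_def proj_diff .
  have "proj l (q - rp y) = - (1 - u) * (proj l (rp y) - proj l (rp (par y)))"
    unfolding proj_diff u(3) by (simp add: algebra_simps)
  also have "\<dots> \<le> 0" using u(2) st by (simp add: mult_nonpos_nonneg)
  finally show ?thesis .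
qed

lemma anc_case: assumes "y \<in> V" "y \<noteq> r" "y' \<in> D y" "y' \<noteq> y"
  "q \<in> closed_segment (rp (par y)) (rp y)" "q \<in> closed_segment (rp (par y')) (rp y')"
  shows "q = rp y \<and> par y' = y"
proof -
  obtain c where c: "c \<in> V" "c \<noteq> r" "par c = y" "y' \<in> D c" using D_child[OF assms(3,4)] by blast
  define l where "l = (cos ((a1 y + a2 y)/2), sin ((a1 y + a2 y)/2))"
  have gy: "good l y" using mid_good[OF assms(1)] unfolding l_def .
  have cD: "c \<in> D y" using D_parI[OF c(1,2)] c(3) by simp
  have gc: "good l c" using good_desc[OF assms(1) cD gy] .
  have h: "proj l (q - rp y) > 0 \<or> (y' = c \<and> q = rp y)" using seg_pos[OF c(1,2) gc c(4) assms(6)] c(3) by simp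
  have "proj l (q - rp y) \<le> 0" using seg_self_neg[OF assms(1,2) gy assms(5)] .
  then show ?thesis using h c(3) by auto
qed

lemma seg_disj: assumes "y \<in> V" "y \<noteq> r" "y' \<in> V" "y' \<noteq> r" "y \<noteq> y'"
  "q \<in> closed_segment (rp (par y)) (rp y)" "q \<in> closed_segment (rp (par y')) (rp y')"
  shows "q \<in> rp ` ({par y, y} \<inter> {par y', y'})"
proof (cases "y' \<in> D y")
  case True
  then have "q = rp y \<and> par y' = y" using anc_case[OF assms(1,2) True] assms by blast
  then show ?thesis by auto
next
  case F1: False
  show ?thesis
  proof (cases "y \<in> D y'")
    case True
    then have "q = rp y' \<and> par y = y'" using anc_case[OF assms(3,4) True] assms by metis
    then show ?thesis by auto
  next
    case F2: False
    obtain c c' where cc: "c \<in> V" "c \<noteq> r" "c' \<in> V" "c' \<noteq> r" "c \<noteq> c'" "par c = par c'" "y \<in> D c" "y' \<in> D c'"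
      using lca[OF assms(1,3) F2 F1] by blast
    obtain l where l: "good l c" "good (- l) c'" using sib_sep[OF cc(1-4,6,5)] by blast
    have h1: "proj l (q - rp (par c)) > 0 \<or> (y = c \<and> q = rp (par c))" using seg_pos[OF cc(1,2) l(1) cc(7) assms(6)] .
    have h2: "proj (- l) (q - rp (par c)) > 0 \<or> (y' = c' \<and> q = rp (par c))" using seg_pos[OF cc(3,4) l(2) cc(8) assms(7)] cc(6) by simp
    have "y = c \<and> y' = c' \<and> q = rp (par c)" using h1 h2 unfolding proj_neg by (auto simp: proj_def)
    then show ?thesis using cc(6) by auto
  qed
qed

lemma rp_inj: assumes "u \<in> V" "v \<in> V" "rp u = rp v" shows "u = v"
proof (rule ccontr)
  assume ne: "u \<noteq> v"
  have anc: False if A: "a \<in> V" "b \<in> D a" "b \<noteq> a" "rp a = rp b" for a b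
  proof -
    obtain c where c: "c \<in> V" "c \<noteq> r" "par c = a" "b \<in> D c" using D_child[OF A(2,3)] by blast
    define l where "l = (cos ((a1 a + a2 a)/2), sin ((a1 a + a2 a)/2))"
    have cD: "c \<in> D a" using D_parI[OF c(1,2)] c(3) by simp
    have gc: "good l c" using good_desc[OF A(1) cD mid_good[OF A(1)]] unfolding l_def .
    have "proj l (rp b - rp (par c)) > 0" using main_pos[OF c(1,2) gc c(4)] .
    then show False using A(4) c(3) by (simp add: proj_def)
  qed
  show False
  proof (cases "v \<in> D u")
    case True then show False using anc[OF assms(1) True] ne assms(3) by metis
  next
    case F1: False
    show False
    proof (cases "u \<in> D v")
      case True then show False using anc[OF assms(2) True] ne assms(3) by metis
    next
      case F2: False
      obtain c c' where cc: "c \<in> V" "c \<noteq> r" "c' \<in> V" "c' \<noteq> r" "c \<noteq> c'" "par c = par c'" "u \<in> D c" "v \<in> D c'"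
        using lca[OF assms(1,2) F2 F1] by blast
      obtain l where l: "good l c" "good (- l) c'" using sib_sep[OF cc(1-4,6,5)] by blast
      have "proj l (rp u - rp (par c)) > 0" using main_pos[OF cc(1,2) l(1) cc(7)] .
      moreover have "proj (- l) (rp v - rp (par c')) > 0" using main_pos[OF cc(3,4) l(2) cc(8)] .
      ultimately show False using assms(3) cc(6) unfolding proj_neg by simp
    qed
  qed
qed

lemma edge_seg: assumes "(a, b) \<in> E"
  obtains y where "y \<in> V" "y \<noteq> r" "{a, b} = {par y, y}"
    "closed_segment (rpt pos a) (rpt pos b) = closed_segment (rp (par y)) (rp y)"
proof -
  from edge_cases[OF assms] show ?thesis
  proof
    assume h: "b \<in> V \<and> b \<noteq> r \<and> a = par b"
    then show ?thesis using that[of b] unfolding rp_def by auto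
  next
    assume h: "a \<in> V \<and> a \<noteq> r \<and> b = par a"
    then show ?thesis using that[of a] unfolding rp_def by (auto simp: closed_segment_commute)
  qed
qed

lemma planar: "planar_drawing V E pos"
  unfolding planar_drawing_def
proof (intro conjI allI impI)
  show "inj_on pos V"
    by (rule inj_onI) (use rp_inj in \<open>auto simp: rp_def rpt_def\<close>)
next
  fix a b c d assume h: "(a, b) \<in> E \<and> (c, d) \<in> E \<and> {a, b} \<noteq> {c, d}"
  obtain y where y: "y \<in> V" "y \<noteq> r" "{a, b} = {par y, y}"
    "closed_segment (rpt pos a) (rpt pos b) = closed_segment (rp (par y)) (rp y)" using edge_seg h by blast
  obtain y' where y': "y' \<in> V" "y' \<noteq> r" "{c, d} = {par y', y'}"
    "closed_segment (rpt pos c) (rpt pos d) = closed_segment (rp (par y')) (rp y')" using edge_seg h by blast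
  have "y \<noteq> y'" using h y y' by auto
  then show "closed_segment (rpt pos a) (rpt pos b) \<inter> closed_segment (rpt pos c) (rpt pos d) \<subseteq> rpt pos ` ({a, b} \<inter> {c, d})"
    unfolding y(3,4) y'(3,4) using seg_disj[OF y(1,2) y'(1,2)] unfolding rp_def by blast
next
  fix a b w assume h: "(a, b) \<in> E \<and> w \<in> V \<and> w \<notin> {a, b}"
  obtain y where y: "y \<in> V" "y \<noteq> r" "{a, b} = {par y, y}"
    "closed_segment (rpt pos a) (rpt pos b) = closed_segment (rp (par y)) (rp y)" using edge_seg h by blast
  show "rpt pos w \<notin> closed_segment (rpt pos a) (rpt pos b)"
  proof
    assume q: "rpt pos w \<in> closed_segment (rpt pos a) (rpt pos b)"
    then have q': "rp w \<in> closed_segment (rp (par y)) (rp y)" using y(4) unfolding rp_def by simp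
    have wy: "w \<noteq> y" "w \<noteq> par y" using h y(3) by auto
    show False
    proof (cases "w = r")
      case True
      have yD: "y \<in> D r" using D_r[OF y(1)] .
      obtain c where c: "c \<in> V" "c \<noteq> r" "par c = r" "y \<in> D c" using D_child[OF yD y(2)[symmetric, THEN not_sym]] by blast
      have "y \<noteq> c" using wy True c(3) by auto
      define l where "l = (cos ((a1 r + a2 r)/2), sin ((a1 r + a2 r)/2))"
      have cD: "c \<in> D r" using D_r[OF c(1)] .
      have gc: "good l c" using good_desc[OF rV cD mid_good[OF rV]] unfolding l_def .
      have "proj l (rp w - rp (par c)) > 0" using seg_pos[OF c(1,2) gc c(4) q'] \<open>y \<noteq> c\<close> by blast
      then show False using True c(3) by (simp add: proj_def)
    next
      case False
      have "rp w \<in> closed_segment (rp (par w)) (rp w)" by simp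
      then have "rp w \<in> rp ` ({par y, y} \<inter> {par w, w})" using seg_disj[OF y(1,2) h[THEN conjunct2, THEN conjunct1] False] q' wy by blast
      then obtain t where t: "t \<in> {par y, y}" "rp w = rp t" by blast
      have "t \<in> V" using t(1) par(3)[OF y(1,2)] y(1) by auto
      then have "w = t" using rp_inj h t(2) by blast
      then show False using t(1) wy by auto
    qed
  qed
qed

end



context actx begin

definition R :: "real \<times> real \<Rightarrow> 'a \<Rightarrow> 'a \<Rightarrow> bool" where
  "R l a b \<longleftrightarrow> (a, b) \<in> E \<and> proj l (rp a) < proj l (rp b)"

lemma R_down: assumes "c \<in> V" "c \<noteq> r" "good l c" "a \<in> D c" shows "R l (par a) a"
proof -
  have aV: "a \<in> V" using D_V[OF assms(1,4)] .
  have ar: "a \<noteq> r" using assms r_notin_D by blast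
  have "proj l (stp a) > 0" using good_stp[OF aV ar good_desc[OF assms(1,4,3)]] .
  then show ?thesis unfolding R_def stp_def proj_diff using par(1)[OF aV ar] by simp
qed

lemma R_up: assumes "c \<in> V" "c \<noteq> r" "good (- l) c" "a \<in> D c" shows "R l a (par a)"
proof -
  have aV: "a \<in> V" using D_V[OF assms(1,4)] .
  have ar: "a \<noteq> r" using assms r_notin_D by blast
  have "proj (- l) (stp a) > 0" using good_stp[OF aV ar good_desc[OF assms(1,4,3)]] .
  moreover have "(a, par a) \<in> E" using par(1)[OF aV ar] symE by (auto dest: symD)
  ultimately show ?thesis unfolding R_def stp_def proj_diff proj_neg by simp
qed

lemma succ_up: assumes "c \<in> V" "c \<noteq> r" "good (- l) c" "x \<in> D c"
  shows "successively (R l) (upl x (dist x - dist c))"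
proof (rule successively_mono[OF conjunct2[OF upl_chain[OF assms(4) order_refl]]])
  fix a b assume "b = par a \<and> a \<in> D c \<and> a \<noteq> c"
  then show "R l a b" using R_up[OF assms(1-3)] by blast
qed

lemma succ_down: assumes "c \<in> V" "c \<noteq> r" "good l c" "x \<in> D c"
  shows "successively (R l) (rev (upl x (dist x - dist c)))"
  unfolding successively_rev
proof (rule successively_mono[OF conjunct2[OF upl_chain[OF assms(4) order_refl]]])
  fix a b assume "b = par a \<and> a \<in> D c \<and> a \<noteq> c"
  then show "R l b a" using R_down[OF assms(1-3)] by blast
qed

lemma fin_mono: assumes "xs \<noteq> []" "successively (R l) xs" "l \<noteq> 0"
  shows "walk E xs \<and> distinct xs \<and> monotone_path pos xs"
proof -
  have s1: "successively (\<lambda>a b. (a, b) \<in> E) xs" by (rule successively_mono[OF assms(2)]) (simp add: R_def)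
  have s2: "successively (\<lambda>a b. proj l (rp a) < proj l (rp b)) xs" by (rule successively_mono[OF assms(2)]) (simp add: R_def)
  have w: "walk E xs" unfolding walk_succ using assms(1) s1 by simp
  have d: "distinct xs" using succ_less_distinct[OF s2] .
  have "\<forall>i < length xs - 1. proj l (rpt pos (xs ! i)) < proj l (rpt pos (xs ! Suc i))"
  proof (intro allI impI)
    fix i assume "i < length xs - 1"
    then have "Suc i < length xs" by simp
    from successively_nth[OF s2 this] show "proj l (rpt pos (xs ! i)) < proj l (rpt pos (xs ! Suc i))" unfolding rp_def .
  qed
  then have "monotone_path pos xs" unfolding monotone_path_def using assms(3) by blast
  then show ?thesis using w d by blast
qed

lemma monotone: "monotone_drawing V E pos"
  unfolding monotone_drawing_def
proof (intro ballI)
  fix u v assume uv: "u \<in> V" "v \<in> V"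
  show "\<exists>xs. walk E xs \<and> distinct xs \<and> hd xs = u \<and> last xs = v \<and> monotone_path pos xs"
  proof (cases "u = v")
    case True
    have "walk E [u]" unfolding walk_def by simp
    moreover have "monotone_path pos [u]" unfolding monotone_path_def by (intro exI[of _ "(1,0)"]) (simp add: zero_prod_def)
    ultimately show ?thesis using True by (intro exI[of _ "[u]"]) simp
  next
    case ne: False
    show ?thesis
    proof (cases "v \<in> D u")
      case True
      obtain c where c: "c \<in> V" "c \<noteq> r" "par c = u" "v \<in> D c" using D_child[OF True] ne by metis
      define l where "l = (cos ((a1 u + a2 u)/2), sin ((a1 u + a2 u)/2))"
      have cD: "c \<in> D u" using D_parI[OF c(1,2)] c(3) by simp
      have gc: "good l c" using good_desc[OF uv(1) cD mid_good[OF uv(1)]] unfolding l_def .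
      define xs where "xs = u # rev (upl v (dist v - dist c))"
      have "R l (par c) c" using R_down[OF c(1,2) gc D_refl] .
      then have "successively (R l) xs" unfolding xs_def using succ_down[OF c(1,2) gc c(4)]
        by (simp add: successively_Cons hd_rev upl_to_anc[OF c(4)] c(3))
      then have "walk E xs \<and> distinct xs \<and> monotone_path pos xs" using fin_mono good_ne[OF c(1) gc] unfolding xs_def by blast
      moreover have "hd xs = u" "last xs = v" unfolding xs_def by (simp_all add: last_rev)
      ultimately show ?thesis by blast
    next
      case F1: False
      show ?thesis
      proof (cases "u \<in> D v")
        case True
        obtain c where c: "c \<in> V" "c \<noteq> r" "par c = v" "u \<in> D c" using D_child[OF True] ne by metis
        define l0 where "l0 = (cos ((a1 v + a2 v)/2), sin ((a1 v + a2 v)/2))"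
        have cD: "c \<in> D v" using D_parI[OF c(1,2)] c(3) by simp
        have gc: "good l0 c" using good_desc[OF uv(2) cD mid_good[OF uv(2)]] unfolding l0_def .
        then have gc': "good (- (- l0)) c" by simp
        define xs where "xs = upl u (dist u - dist c) @ [v]"
        have "R (- l0) c (par c)" using R_up[OF c(1,2) gc' D_refl] .
        then have "successively (R (- l0)) xs" unfolding xs_def using succ_up[OF c(1,2) gc' c(4)]
          by (simp add: successively_append_iff upl_to_anc[OF c(4)] c(3))
        moreover have "- l0 \<noteq> 0" using good_ne[OF c(1) gc] by simp
        ultimately have "walk E xs \<and> distinct xs \<and> monotone_path pos xs" using fin_mono unfolding xs_def by blast
        moreover have "hd xs = u" "last xs = v" unfolding xs_def by simp_all
        ultimately show ?thesis by blast
      next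
        case F2: False
        obtain c c' where cc: "c \<in> V" "c \<noteq> r" "c' \<in> V" "c' \<noteq> r" "c \<noteq> c'" "par c = par c'" "u \<in> D c" "v \<in> D c'"
          using lca[OF uv F2 F1] by blast
        obtain l where l: "good l c'" "good (- l) c" using sib_sep[OF cc(3,4,1,2) cc(6)[symmetric] cc(5)[symmetric]] by blast
        define xs where "xs = upl u (dist u - dist c) @ (par c # rev (upl v (dist v - dist c')))"
        have j1: "R l c (par c)" using R_up[OF cc(1,2) l(2) D_refl] .
        have j2: "R l (par c) c'" using R_down[OF cc(3,4) l(1) D_refl] cc(6) by simp
        have "successively (R l) xs" unfolding xs_def using succ_up[OF cc(1,2) l(2) cc(7)] succ_down[OF cc(3,4) l(1) cc(8)] j1 j2
          by (simp add: successively_append_iff successively_Cons hd_rev upl_to_anc[OF cc(7)] upl_to_anc[OF cc(8)])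
        then have "walk E xs \<and> distinct xs \<and> monotone_path pos xs" using fin_mono good_ne[OF cc(3) l(1)] unfolding xs_def by blast
        moreover have "hd xs = u" "last xs = v" unfolding xs_def by (simp_all add: last_rev)
        ultimately show ?thesis by blast
      qed
    qed
  qed
qed

end



context actx begin

lemma D_r_eq: "D r = V" using D_r D_V[OF rV] by blast
lemma s_r: "s r = real (card V)" unfolding s_def D_r_eq ..
lemma W_r: "W r = pi" unfolding W_def using a_r by simp

lemma comp_sub: assumes "x \<in> V" "x \<noteq> r" shows "D x \<subseteq> comp_without V E r x"
proof
  fix y assume "y \<in> D x"
  then have "(x, y) \<in> PE\<^sup>*" unfolding D_def by simp
  then show "y \<in> comp_without V E r x" unfolding comp_without_def mem_Collect_eq
  proof (induction rule: rtrancl_induct)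
    case (step y z)
    then have z: "z \<in> V" "z \<noteq> r" "y = par z" using PE_iff by auto
    have yD: "y \<in> D x" using step(1) unfolding D_def by simp
    have yr: "y \<noteq> r" using yD r_notin_D assms by blast
    have yV: "y \<in> V" using D_V[OF assms(1) yD] .
    have "(y, z) \<in> E" using par(1)[OF z(1,2)] z(3) by simp
    then have "(y, z) \<in> E \<inter> (V - {r}) \<times> (V - {r})" using yr yV z by simp
    then show ?case by (rule rtrancl_into_rtrancl[OF step(3)])
  qed simp
qed

lemma comp_fin: assumes "x \<in> V" shows "finite (comp_without V E r x)"
proof (rule finite_subset[OF _ finite_insert[THEN iffD2, OF finV, of x]])
  show "comp_without V E r x \<subseteq> insert x V"
  proof
    fix y assume "y \<in> comp_without V E r x"
    then have "(x, y) \<in> (E \<inter> (V - {r}) \<times> (V - {r}))\<^sup>*" unfolding comp_without_def by simp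
    then show "y \<in> insert x V" by (cases rule: rtranclE) auto
  qed
qed

lemma grav_s: assumes "x \<in> V" "x \<noteq> r" shows "s x \<le> real (card V div 2)"
proof -
  have "card (D x) \<le> card (comp_without V E r x)" using card_mono[OF comp_fin[OF assms(1)] comp_sub[OF assms]] .
  moreover have "real (card (comp_without V E r x)) \<le> real (card V) / 2" using grav assms unfolding gravity_root_def by auto
  ultimately have "2 * card (D x) \<le> card V" by linarith
  then have "card (D x) \<le> card V div 2" by linarith
  then show ?thesis unfolding s_def by simp
qed

definition K :: real where "K = pi * real (card V div 2) / (real (card V) - 1)"

lemma card2: assumes "x \<in> V" "x \<noteq> r" shows "card V \<ge> 2"
proof -
  have "card {r, x} \<le> card V" using card_mono[OF finV, of "{r, x}"] assms rV by blast
  moreover have "card {r, x} = 2" using assms by simp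
  ultimately show ?thesis by simp
qed

lemma half_ge: "real (n div 2) \<ge> (real n - 1) / 2"
proof -
  have "n \<le> 2 * (n div 2) + 1" by linarith
  then have "real n \<le> 2 * real (n div 2) + 1" by linarith
  then show ?thesis by simp
qed

lemma K_ge: assumes "x \<in> V" "x \<noteq> r" shows "pi / 2 \<le> K"
proof -
  have n: "real (card V) - 1 > 0" using card2[OF assms] by simp
  have "pi / 2 = pi * ((real (card V) - 1) / 2) / (real (card V) - 1)" using n by (simp add: field_simps)
  also have "\<dots> \<le> K" unfolding K_def using half_ge[of "card V"] n
    by (intro divide_right_mono mult_left_mono) auto
  finally show ?thesis .
qed

lemma W_le_K: assumes "x \<in> V" shows "x \<noteq> r \<longrightarrow> W x \<le> K"
proof (rule tree_induct[of "\<lambda>x. x \<noteq> r \<longrightarrow> W x \<le> K", OF _ _ assms])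
  fix y assume y: "y \<in> V" "y \<noteq> r" and IH: "par y \<noteq> r \<longrightarrow> W (par y) \<le> K"
  obtain i where d: "W y = W (par y) * s y / (s (par y) - 1)" using child_data[OF y] by metis
  note pV = par(3)[OF y]
  have sy: "s y \<ge> 1" using s_pos[OF y(1)] .
  have sp: "s y \<le> s (par y) - 1" using s_par[OF y] .
  have Wp: "W (par y) > 0" using W_pos[OF pV] .
  show "y \<noteq> r \<longrightarrow> W y \<le> K"
  proof (cases "par y = r")
    case True
    have n: "real (card V) - 1 > 0" using card2[OF y] by simp
    have "W y = pi * s y / (real (card V) - 1)" using d True W_r s_r by simp
    also have "\<dots> \<le> K" unfolding K_def using grav_s[OF y] n by (intro divide_right_mono) auto
    finally show ?thesis by simp
  next
    case False
    have "s y / (s (par y) - 1) \<le> 1" using sp sy by simp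
    then have "W y \<le> W (par y)" using d Wp by (simp add: mult_left_le mult_divide_mult_cancel_left_if) (smt (verit) mult_left_le times_divide_eq_right)
    then show ?thesis using IH False by simp
  qed
qed simp

definition X :: "'a \<Rightarrow> real" where "X x = real_of_int (fst (pos x))"
definition Y :: "'a \<Rightarrow> real" where "Y x = real_of_int (snd (pos x))"

lemma coord: assumes "x \<in> V"
  shows "\<bar>X x\<bar> \<le> K * ((real (card V) - 1) / pi - (s x - 1) / W x) \<and> 0 \<le> Y x
     \<and> Y x \<le> K * ((real (card V) - 1) / pi - (s x - 1) / W x)"
proof (rule tree_induct[OF _ _ assms])
  show "\<bar>X r\<bar> \<le> K * ((real (card V) - 1) / pi - (s r - 1) / W r) \<and> 0 \<le> Y r
     \<and> Y r \<le> K * ((real (card V) - 1) / pi - (s r - 1) / W r)"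
    using pos_r s_r W_r unfolding X_def Y_def by simp
next
  fix y assume y: "y \<in> V" "y \<noteq> r" and IH: "\<bar>X (par y)\<bar> \<le> K * ((real (card V) - 1) / pi - (s (par y) - 1) / W (par y)) \<and> 0 \<le> Y (par y)
     \<and> Y (par y) \<le> K * ((real (card V) - 1) / pi - (s (par y) - 1) / W (par y))"
  obtain i where d: "W y = W (par y) * s y / (s (par y) - 1)" using child_data[OF y] by metis
  note pV = par(3)[OF y]
  have sy: "s y \<ge> 1" using s_pos[OF y(1)] .
  have sp: "s y \<le> s (par y) - 1" using s_par[OF y] .
  have Wp: "W (par y) > 0" using W_pos[OF pV] .
  have Wy: "W y > 0" using W_pos[OF y(1)] .
  have iden: "(s (par y) - 1) / W (par y) = s y / W y"
  proof -
    have z: "s (par y) - 1 > 0" using sy sp by simp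
    have "s y / W y = s y * (s (par y) - 1) / (W (par y) * s y)" unfolding d using z Wp sy by simp
    also have "\<dots> = (s (par y) - 1) / W (par y)" using sy by simp
    finally show ?thesis by simp
  qed
  have v: "0 \<le> a1 y" "a1 y < a2 y" "a2 y \<le> pi" using valid[OF y(1)] by auto
  have bnd: "\<bar>real_of_int (fst (P2 (a1 y) (a2 y)))\<bar> \<le> K / W y \<and> 0 \<le> real_of_int (snd (P2 (a1 y) (a2 y)))
      \<and> real_of_int (snd (P2 (a1 y) (a2 y))) \<le> K / W y"
    using P2_prop[OF v] K_ge[OF y] W_le_K[OF y(1)] y(2) unfolding W_def by auto
  have e: "K * ((real (card V) - 1) / pi - (s (par y) - 1) / W (par y)) + K / W y
      = K * ((real (card V) - 1) / pi - (s y - 1) / W y)"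
    unfolding iden using Wy by (simp add: field_simps)
  have px: "X y = X (par y) + real_of_int (fst (P2 (a1 y) (a2 y)))" "Y y = Y (par y) + real_of_int (snd (P2 (a1 y) (a2 y)))"
    using pos_step[OF y] unfolding X_def Y_def by simp_all
  show "\<bar>X y\<bar> \<le> K * ((real (card V) - 1) / pi - (s y - 1) / W y) \<and> 0 \<le> Y y
     \<and> Y y \<le> K * ((real (card V) - 1) / pi - (s y - 1) / W y)"
    using IH bnd e px by linarith
qed

lemma K_final: "K * ((real (card V) - 1) / pi) = real (card V div 2)"
proof (cases "card V = 1")
  case True then show ?thesis unfolding K_def by simp
next
  case False
  have "card V \<ge> 1" using rV finV by (metis card_0_eq empty_iff less_one not_le)
  then have "real (card V) - 1 > 0" using False by simp
  then show ?thesis unfolding K_def by simp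
qed

lemma K_nonneg: "K \<ge> 0"
proof -
  have "card V \<ge> 1" using rV finV by (metis card_0_eq empty_iff less_one not_le)
  then show ?thesis unfolding K_def by simp
qed

lemma bounds: assumes "v \<in> V"
  shows "\<bar>fst (pos v)\<bar> \<le> int (card V div 2) \<and> 0 \<le> snd (pos v) \<and> snd (pos v) \<le> int (card V div 2)"
proof -
  have t: "(s v - 1) / W v \<ge> 0" using s_pos[OF assms] W_pos[OF assms] by simp
  have "K * ((real (card V) - 1) / pi - (s v - 1) / W v) \<le> K * ((real (card V) - 1) / pi)"
    using t K_nonneg by (intro mult_left_mono) auto
  then have "K * ((real (card V) - 1) / pi - (s v - 1) / W v) \<le> real (card V div 2)" using K_final by simp
  then have "\<bar>X v\<bar> \<le> real (card V div 2) \<and> 0 \<le> Y v \<and> Y v \<le> real (card V div 2)" using coord[OF assms] by linarith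
  then show ?thesis unfolding X_def Y_def by linarith
qed

end



lemma odd_ind_div: "(n - odd_ind n) div 2 = n div 2"
  unfolding odd_ind_def by (cases "odd n") (auto elim: oddE)

theorem theorem5:
  fixes V :: "'a set" and E :: "('a \<times> 'a) set" and r :: 'a
    and chl :: "'a \<Rightarrow> 'a list" and a1 a2 :: "'a \<Rightarrow> real" and pos :: "'a \<Rightarrow> int \<times> int"
  assumes "is_tree V E"
    and "algorithm2 V E r chl a1 a2 pos"
  shows "monotone_drawing V E pos \<and> planar_drawing V E pos
    \<and> (\<forall>v\<in>V. \<bar>fst (pos v)\<bar> \<le> int ((card V - odd_ind (card V)) div 2)
              \<and> 0 \<le> snd (pos v) \<and> snd (pos v) \<le> int ((card V - odd_ind (card V)) div 2))
    \<and> (odd (card V) \<longrightarrow> (\<exists>x0 y0. \<forall>v\<in>V.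
          fst (pos v) \<in> {x0 ..< x0 + int (card V)} \<and> snd (pos v) \<in> {y0 ..< y0 + int ((card V + 1) div 2)}))
    \<and> (even (card V) \<longrightarrow> (\<exists>x0 y0. \<forall>v\<in>V.
          fst (pos v) \<in> {x0 ..< x0 + int (card V + 1)} \<and> snd (pos v) \<in> {y0 ..< y0 + int (card V div 2 + 1)}))"
proof -
  have rV: "r \<in> V" using assms(2) unfolding algorithm2_def gravity_root_def by blast
  interpret A: actx V E r chl a1 a2 pos
    by unfold_locales (use assms rV in auto)
  define n where "n = card V"
  define B where "B = n div 2"
  have bd: "\<forall>v\<in>V. \<bar>fst (pos v)\<bar> \<le> int B \<and> 0 \<le> snd (pos v) \<and> snd (pos v) \<le> int B"
    using A.bounds unfolding B_def n_def by blast
  have g1: "odd n \<longrightarrow> (\<exists>x0 y0. \<forall>v\<in>V.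
          fst (pos v) \<in> {x0 ..< x0 + int n} \<and> snd (pos v) \<in> {y0 ..< y0 + int ((n + 1) div 2)})"
  proof
    assume o: "odd n"
    then have h1: "2 * B + 1 = n" "(n + 1) div 2 = B + 1" unfolding B_def by (auto elim: oddE)
    then have h2: "2 * int B + 1 = int n" "int ((n + 1) div 2) = int B + 1" by linarith+
    show "\<exists>x0 y0. \<forall>v\<in>V. fst (pos v) \<in> {x0 ..< x0 + int n} \<and> snd (pos v) \<in> {y0 ..< y0 + int ((n + 1) div 2)}"
      by (intro exI[of _ "- int B"] exI[of _ 0] ballI) (use bd h2 in \<open>fastforce\<close>)
  qed
  have g2: "even n \<longrightarrow> (\<exists>x0 y0. \<forall>v\<in>V.
          fst (pos v) \<in> {x0 ..< x0 + int (n + 1)} \<and> snd (pos v) \<in> {y0 ..< y0 + int (n div 2 + 1)})"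
  proof
    assume e: "even n"
    then have h1: "2 * B = n" unfolding B_def by auto
    then have h2: "2 * int B = int n" by linarith
    show "\<exists>x0 y0. \<forall>v\<in>V. fst (pos v) \<in> {x0 ..< x0 + int (n + 1)} \<and> snd (pos v) \<in> {y0 ..< y0 + int (n div 2 + 1)}"
      by (intro exI[of _ "- int B"] exI[of _ 0] ballI) (use bd h2 in \<open>fastforce simp: B_def\<close>)
  qed
  show ?thesis using A.monotone A.planar bd g1 g2 unfolding odd_ind_div B_def n_def by blast
qed



end
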